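(* Let $\mathbf A\in\mathbb C^{n\times n}$ with $\operatorname{Ind}\mathbf A=k_1$ and $\operatorname{rank}\mathbf A^{k_1+1}=\operatorname{rank}\mathbf A^{k_1}=r_1\le n$, let $\mathbf B\in\mathbb C^{m\times m}$ with $\operatorname{Ind}\mathbf B=k_2$ and $\operatorname{rank}\mathbf B^{k_2+1}=\operatorname{rank}\mathbf B^{k_2}=r_2\le m$, let $\mathbf D\in\mathbb C^{n\times m}$, and let $\tilde{\mathbf D}=\mathbf A^{k_1}\mathbf D\mathbf B^{k_2}$ with $l$-th row $\tilde{\mathbf d}_{l.}$ and $t$-th column $\tilde{\mathbf d}_{.t}$. For $i=1,\dots,n$, $j=1,\dots,m$ define the column vector $\mathbf d^{\mathbf B}_{.j}\in\mathbb C^{n}$ with $l$-th entry $\sum_{\alpha\in I_{r_2,m}\{j\}}\left|\left(\mathbf B^{k_2+1}_{j.}(\tilde{\mathbf d}_{l.})\right)^{\alpha}_{\alpha}\right|$ and the row vector $\mathbf d^{\mathbf A}_{i.}\in\mathbb C^{1\times m}$ with $t$-th entry $\sum_{\beta\in J_{r_1,n}\{i\}}\left|\left(\mathbf A^{k_1+1}_{.i}(\tilde{\mathbf d}_{.t})\right)^{\beta}_{\beta}\right|$. Then the Drazin inverse solution $\mathbf X=\mathbf A^{D}\mathbf D\mathbf B^{D}=(x_{ij})\in\mathbb C^{n\times m}$ of $\mathbf A\mathbf X\mathbf B=\mathbf D$ satisfies, for all $i,j$, \[x_{ij}=\frac{\sum_{\beta\in J_{r_1,n}\{i\}}\left|\left(\mathbf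 A^{k_1+1}_{.i}(\mathbf d^{\mathbf B}_{.j})\right)^{\beta}_{\beta}\right|}{\sum_{\beta\in J_{r_1,n}}\left|(\mathbf A^{k_1+1})^{\beta}_{\beta}\right|\sum_{\alpha\in I_{r_2,m}}\left|(\mathbf B^{k_2+1})^{\alpha}_{\alpha}\right|} =\frac{\sum_{\alpha\in I_{r_2,m}\{j\}}\left|\left(\mathbf B^{k_2+1}_{j.}(\mathbf d^{\mathbf A}_{i.})\right)^{\alpha}_{\alpha}\right|}{\sum_{\beta\in J_{r_1,n}}\left|(\mathbf A^{k_1+1})^{\beta}_{\beta}\right|\sum_{\alpha\in I_{r_2,m}}\left|(\mathbf B^{k_2+1})^{\alpha}_{\alpha}\right|}.\]
   Context: For a square $\mathbf M$, $\operatorname{Ind}\mathbf M$ is the smallest nonnegative $k$ with $\operatorname{rank}\mathbf M^{k+1}=\operatorname{rank}\mathbf M^{k}$; the Drazin inverse $\mathbf M^{D}$ is the unique $\mathbf X$ with $\mathbf M^{k+1}\mathbf X=\mathbf M^{k}$, $\mathbf X\mathbf M\mathbf X=\mathbf X$, $\mathbf M\mathbf X=\mathbf X\mathbf M$, $k=\operatorname{Ind}\mathbf M$. $\mathbf M_{.i}(\mathbf c)$ (resp. $\mathbf M_{j.}(\mathbf c)$) is obtained by replacing the $i$-th column (resp. $j$-th row) of $\mathbf M$ by $\mathbf c$. For $1\le k\le s$, $L_{k,s}$ is the set of strictly increasing sequences of $k$ elements of $\{1,\dots,s\}$; $I_{k,s}=J_{k,s}=L_{k,s}$, $I_{k,s}\{i\}=J_{k,s}\{i\}=\{\alpha\in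 L_{k,s}:i\in\alpha\}$; $\mathbf M^{\alpha}_{\alpha}$ is the principal submatrix indexed by $\alpha$; $|\cdot|$ is the determinant. *)

theory Defs
  imports "Jordan_Normal_Form.Determinant" "Jordan_Normal_Form.DL_Rank" "Jordan_Normal_Form.DL_Submatrix"
begin

definition mrank :: "'a::field mat \<Rightarrow> nat" where
  "mrank M = vec_space.rank (dim_row M) M"

definition mat_index :: "'a::field mat \<Rightarrow> nat" where
  "mat_index M = (LEAST k. mrank (M ^\<^sub>m (k+1)) = mrank (M ^\<^sub>m k))"

definition drazin_inv :: "'a::field mat \<Rightarrow> 'a mat" where
  "drazin_inv M = (THE X. X \<in> carrier_mat (dim_row M) (dim_row M) \<and>
      M ^\<^sub>m (mat_index M + 1) * X = M ^\<^sub>m (mat_index M) \<and>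
      X * M * X = X \<and> M * X = X * M)"

definition replace_row :: "'a mat \<Rightarrow> 'a vec \<Rightarrow> nat \<Rightarrow> 'a mat" where
  "replace_row M c j = mat (dim_row M) (dim_col M) (\<lambda>(i,k). if i = j then c $ k else M $$ (i,k))"

(* L_{k,s}: strictly increasing k-sequences in {1..s}, represented (0-based) as k-subsets of {0..<s} *)
definition idx_sets :: "nat \<Rightarrow> nat \<Rightarrow> nat set set" where
  "idx_sets k s = {\<alpha>. \<alpha> \<subseteq> {0..<s} \<and> card \<alpha> = k}"

definition idx_sets_with :: "nat \<Rightarrow> nat \<Rightarrow> nat \<Rightarrow> nat set set" where
  "idx_sets_with k s i = {\<alpha> \<in> idx_sets k s. i \<in> \<alpha>}"

definition principal_sub :: "'a mat \<Rightarrow> nat set \<Rightarrow> 'a mat" where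
  "principal_sub M \<alpha> = submatrix M \<alpha> \<alpha>"

end

theory Submission
  imports Defs
begin

lemma pick_bij:
  assumes "finite \<beta>" "card \<beta> = r"
  shows "bij_betw (pick \<beta>) {0..<r} \<beta>"
proof -
  have inj: "inj_on (pick \<beta>) {0..<r}"
  proof (rule inj_onI)
    fix x y assume xy: "x \<in> {0..<r}" "y \<in> {0..<r}" "pick \<beta> x = pick \<beta> y"
    show "x = y"
    proof (rule ccontr)
      assume "x \<noteq> y"
      then consider "x < y" | "y < x" by linarith
      thus False using pick_mono_le[of y \<beta> x] pick_mono_le[of x \<beta> y] xy assms by (cases, auto)
    qed
  qed
  have sub: "pick \<beta> ` {0..<r} \<subseteq> \<beta>" using pick_in_set_le assms by auto
  have "card (pick \<beta> ` {0..<r}) = r" using card_image[OF inj] by simp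
  hence "pick \<beta> ` {0..<r} = \<beta>" using card_subset_eq[OF assms(1) sub] assms by simp
  thus ?thesis using inj unfolding bij_betw_def by simp
qed

lemma card_less_pick:
  fixes \<beta> :: "nat set"
  assumes "finite \<beta>" "a \<in> \<beta>"
  shows "card {x\<in>\<beta>. x < a} < card \<beta>"
proof -
  have "a \<notin> {x\<in>\<beta>. x < a}" by simp
  hence "{x\<in>\<beta>. x < a} \<subset> \<beta>" using assms(2) by blast
  thus ?thesis using assms(1) by (rule psubset_card_mono[rotated])
qed

lemma submatrix_rows_carrier:
  assumes "F \<in> carrier_mat n r" "\<beta> \<subseteq> {0..<n}"
  shows "submatrix F \<beta> UNIV \<in> carrier_mat (card \<beta>) r"
proof -
  have "{i. i < n \<and> i \<in> \<beta>} = \<beta>" using assms(2) by auto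
  moreover have "{j. j < r \<and> j \<in> (UNIV::nat set)} = {0..<r}" by auto
  ultimately show ?thesis using assms(1) unfolding submatrix_def by auto
qed

lemma submatrix_cols_carrier:
  assumes "H \<in> carrier_mat r n" "\<beta> \<subseteq> {0..<n}"
  shows "submatrix H UNIV \<beta> \<in> carrier_mat r (card \<beta>)"
proof -
  have "{i. i < n \<and> i \<in> \<beta>} = \<beta>" using assms(2) by auto
  moreover have "{j. j < r \<and> j \<in> (UNIV::nat set)} = {0..<r}" by auto
  ultimately show ?thesis using assms(1) unfolding submatrix_def by auto
qed

lemma submatrix_rows_index:
  assumes "F \<in> carrier_mat n r" "\<beta> \<subseteq> {0..<n}" "i < card \<beta>" "j < r"
  shows "submatrix F \<beta> UNIV $$ (i,j) = F $$ (pick \<beta> i, j)"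
proof -
  have "{i. i < n \<and> i \<in> \<beta>} = \<beta>" using assms(2) by auto
  moreover have "{j. j < r \<and> j \<in> (UNIV::nat set)} = {0..<r}" by auto
  ultimately show ?thesis using assms unfolding submatrix_def by (auto simp: pick_UNIV)
qed

lemma submatrix_cols_index:
  assumes "H \<in> carrier_mat r n" "\<beta> \<subseteq> {0..<n}" "i < r" "j < card \<beta>"
  shows "submatrix H UNIV \<beta> $$ (i,j) = H $$ (i, pick \<beta> j)"
proof -
  have "{i. i < n \<and> i \<in> \<beta>} = \<beta>" using assms(2) by auto
  moreover have "{j. j < r \<and> j \<in> (UNIV::nat set)} = {0..<r}" by auto
  ultimately show ?thesis using assms unfolding submatrix_def by (auto simp: pick_UNIV)
qed

lemma det_perm_rows_sub:
  fixes F :: "'a::comm_ring_1 mat"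
  assumes F: "F \<in> carrier_mat n r" and b: "\<beta> \<subseteq> {0..<n}" "card \<beta> = r"
    and p: "p permutes {0..<r}"
  shows "det (mat\<^sub>r r r (\<lambda>i. row F (pick \<beta> (p i)))) = signof p * det (submatrix F \<beta> UNIV)"
proof -
  have S: "submatrix F \<beta> UNIV \<in> carrier_mat r r" using submatrix_rows_carrier[OF F b(1)] b(2) by simp
  have pr: "i < r \<Longrightarrow> p i < r" for i using permutes_in_image[OF p] by auto
  have pn: "i < r \<Longrightarrow> pick \<beta> (p i) < n" for i
  proof -
    assume "i < r"
    hence "pick \<beta> (p i) \<in> \<beta>" using pr pick_in_set_le[of "p i" \<beta>] b(2) by simp
    thus ?thesis using b(1) by auto
  qed
  have "mat\<^sub>r r r (\<lambda>i. row F (pick \<beta> (p i))) = mat r r (\<lambda>(i,j). submatrix F \<beta> UNIV $$ (p i, j))"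
  proof (rule eq_matI)
    fix i j assume ij: "i < dim_row (mat r r (\<lambda>(i,j). submatrix F \<beta> UNIV $$ (p i, j)))"
      "j < dim_col (mat r r (\<lambda>(i,j). submatrix F \<beta> UNIV $$ (p i, j)))"
    hence ij': "i < r" "j < r" by auto
    have "submatrix F \<beta> UNIV $$ (p i, j) = F $$ (pick \<beta> (p i), j)"
      using submatrix_rows_index[OF F b(1), of "p i" j] pr[OF ij'(1)] ij'(2) b(2) by simp
    thus "mat\<^sub>r r r (\<lambda>i. row F (pick \<beta> (p i))) $$ (i, j) = mat r r (\<lambda>(i,j). submatrix F \<beta> UNIV $$ (p i, j)) $$ (i, j)"
      using ij' pn[OF ij'(1)] F by simp
  qed auto
  thus ?thesis using det_permute_rows[OF S p] by simp
qed

lemma cauchy_binet: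
  fixes H F :: "'a::comm_ring_1 mat"
  assumes H: "H \<in> carrier_mat r n" and F: "F \<in> carrier_mat n r"
  shows "det (H * F) = (\<Sum>\<beta>\<in>idx_sets r n. det (submatrix H UNIV \<beta>) * det (submatrix F \<beta> UNIV))"
proof -
  let ?U = "{0..<r}" and ?S = "{0..<n}"
  let ?Fs = "{f. (\<forall>i\<in>?U. f i \<in> ?S) \<and> (\<forall>i. i \<notin> ?U \<longrightarrow> f i = i)}"
  define t where "t f = (\<Prod>i\<in>?U. H $$ (i, f i)) * det (mat\<^sub>r r r (\<lambda>i. row F (f i)))" for f
  have finFs: "finite ?Fs" by (rule finite_bounded_functions, auto)
  have step1: "det (H * F) = (\<Sum>f\<in>?Fs. t f)"
  proof -
    have "det (H * F) = (\<Sum>f\<in>?Fs. det (mat\<^sub>r r r (\<lambda>i. H $$ (i, f i) \<cdot>\<^sub>v row F (f i))))"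
      unfolding mat_mul_finsum_alt[OF H F]
      by (rule det_linear_rows_sum, insert F, auto)
    also have "\<dots> = (\<Sum>f\<in>?Fs. t f)"
    proof (rule sum.cong[OF refl])
      fix f assume f: "f \<in> ?Fs"
      show "det (mat\<^sub>r r r (\<lambda>i. H $$ (i, f i) \<cdot>\<^sub>v row F (f i))) = t f"
        unfolding t_def by (rule det_rows_mul, insert F f, auto)
    qed
    finally show ?thesis .
  qed
  let ?Fi = "{f\<in>?Fs. inj_on f ?U}"
  have step2: "(\<Sum>f\<in>?Fs. t f) = (\<Sum>f\<in>?Fi. t f)"
  proof (rule sum.mono_neutral_right[OF finFs])
    show "?Fi \<subseteq> ?Fs" by auto
    show "\<forall>f\<in>?Fs - ?Fi. t f = 0"
    proof
      fix f assume f: "f \<in> ?Fs - ?Fi"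
      then obtain i j where ij: "i \<in> ?U" "j \<in> ?U" "i \<noteq> j" "f i = f j" unfolding inj_on_def by auto
      have "det (mat\<^sub>r r r (\<lambda>i. row F (f i))) = 0"
        by (rule det_identical_rows[of _ r i j], insert ij f F, auto)
      thus "t f = 0" unfolding t_def by simp
    qed
  qed
  have finFi: "finite ?Fi" by (rule finite_subset[OF _ finFs]) (rule subsetI, simp)
  have img: "(\<lambda>f. f ` ?U) ` ?Fi \<subseteq> idx_sets r n"
  proof
    fix b assume "b \<in> (\<lambda>f. f ` ?U) ` ?Fi"
    then obtain f where f: "f \<in> ?Fi" and b: "b = f ` ?U" by blast
    show "b \<in> idx_sets r n" unfolding idx_sets_def b using f card_image[of f ?U] by auto
  qed
  have finI: "finite (idx_sets r n)" unfolding idx_sets_def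
    by (rule finite_subset[of _ "Pow {0..<n}"], auto)
  have step3: "(\<Sum>f\<in>?Fi. t f) = (\<Sum>\<beta>\<in>idx_sets r n. \<Sum>f\<in>{f\<in>?Fi. f ` ?U = \<beta>}. t f)"
    by (rule sum.group[OF finFi finI img, symmetric])
  have step4: "(\<Sum>f\<in>{f\<in>?Fi. f ` ?U = \<beta>}. t f) = det (submatrix H UNIV \<beta>) * det (submatrix F \<beta> UNIV)"
    if bI: "\<beta> \<in> idx_sets r n" for \<beta>
  proof -
    have b: "\<beta> \<subseteq> {0..<n}" "card \<beta> = r" using bI unfolding idx_sets_def by auto
    have fb: "finite \<beta>" using b(1) finite_subset by blast
    have HS: "submatrix H UNIV \<beta> \<in> carrier_mat r r" using submatrix_cols_carrier[OF H b(1)] b(2) by simp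
    have pb: "bij_betw (pick \<beta>) {0..<r} \<beta>" by (rule pick_bij[OF fb b(2)])
    let ?P = "{p. p permutes ?U}"
    define g where "g p = (\<lambda>i. if i < r then pick \<beta> (p i) else i)" for p :: "nat \<Rightarrow> nat"
    define h where "h f = (\<lambda>i. if i < r then card {a\<in>\<beta>. a < f i} else i)" for f :: "nat \<Rightarrow> nat"
    have "det (submatrix H UNIV \<beta>) * det (submatrix F \<beta> UNIV)
        = (\<Sum>p\<in>?P. signof p * (\<Prod>i\<in>?U. H $$ (i, pick \<beta> (p i)))) * det (submatrix F \<beta> UNIV)"
    proof -
      have "det (submatrix H UNIV \<beta>) = (\<Sum>p\<in>?P. signof p * (\<Prod>i\<in>?U. submatrix H UNIV \<beta> $$ (i, p i)))"
        by (rule det_def'[OF HS])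
      also have "\<dots> = (\<Sum>p\<in>?P. signof p * (\<Prod>i\<in>?U. H $$ (i, pick \<beta> (p i))))"
      proof (rule sum.cong[OF refl])
        fix p assume p: "p \<in> ?P"
        hence "i < r \<Longrightarrow> p i < r" for i using permutes_in_image[of p ?U] by auto
        thus "signof p * (\<Prod>i\<in>?U. submatrix H UNIV \<beta> $$ (i, p i)) = signof p * (\<Prod>i\<in>?U. H $$ (i, pick \<beta> (p i)))"
          using submatrix_cols_index[OF H b(1)] b(2) by auto
      qed
      finally show ?thesis by simp
    qed
    also have "\<dots> = (\<Sum>p\<in>?P. (\<Prod>i\<in>?U. H $$ (i, pick \<beta> (p i))) * (signof p * det (submatrix F \<beta> UNIV)))"
    proof -
      have "signof p * signof p = (1::'a)" for p :: "nat \<Rightarrow> nat"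
        by (simp add: sign_def)
      thus ?thesis unfolding sum_distrib_right by (intro sum.cong refl) (simp add: algebra_simps)
    qed
    also have "\<dots> = (\<Sum>p\<in>?P. t (g p))"
    proof (rule sum.cong[OF refl])
      fix p assume p: "p \<in> ?P"
      have "(signof p * det (submatrix F \<beta> UNIV)) = det (mat\<^sub>r r r (\<lambda>i. row F (pick \<beta> (p i))))"
        using det_perm_rows_sub[OF F b] p by simp
      also have "mat\<^sub>r r r (\<lambda>i. row F (pick \<beta> (p i))) = mat\<^sub>r r r (\<lambda>i. row F (g p i))"
        by (rule eq_rowI, auto simp: g_def)
      finally show "(\<Prod>i\<in>?U. H $$ (i, pick \<beta> (p i))) * (signof p * det (submatrix F \<beta> UNIV)) = t (g p)"
        unfolding t_def by (simp add: g_def)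
    qed
    also have "\<dots> = (\<Sum>f\<in>{f\<in>?Fi. f ` ?U = \<beta>}. t f)"
    proof (rule sum.reindex_bij_witness[where i = h and j = g])
      fix p assume p: "p \<in> ?P"
      have pr: "i < r \<Longrightarrow> p i < r" for i using permutes_in_image[OF p[simplified]] by auto
      have pid: "i \<ge> r \<Longrightarrow> p i = i" for i using p unfolding permutes_def by auto
      show "h (g p) = p"
      proof
        fix i show "h (g p) i = p i"
        proof (cases "i < r")
          case True
          have "card {a\<in>\<beta>. a < pick \<beta> (p i)} = p i" using card_pick_le[of "p i" \<beta>] pr[OF True] b(2) by simp
          thus ?thesis using True unfolding h_def g_def by simp
        next
          case False thus ?thesis using pid[of i] unfolding h_def g_def by simp
        qed
      qed
      show "g p \<in> {f\<in>?Fi. f ` ?U = \<beta>}"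
      proof -
        have "g p \<in> ?Fs"
        proof -
          have "i < r \<Longrightarrow> pick \<beta> (p i) < n" for i
          proof -
            assume "i < r"
            hence "pick \<beta> (p i) \<in> \<beta>" using pr pick_in_set_le[of "p i" \<beta>] b(2) by simp
            thus ?thesis using b(1) by auto
          qed
          thus ?thesis unfolding g_def by simp
        qed
        moreover have "inj_on (g p) ?U"
        proof -
          have "inj_on p ?U" using permutes_inj_on[OF p[simplified]] .
          moreover have "p ` ?U \<subseteq> ?U" using pr by auto
          ultimately have "inj_on (pick \<beta> \<circ> p) ?U"
            using bij_betw_imp_inj_on[OF pb] by (meson comp_inj_on inj_on_subset)
          thus ?thesis unfolding g_def inj_on_def by auto
        qed
        moreover have "g p ` ?U = \<beta>"
        proof -
          have "g p ` ?U = pick \<beta> ` (p ` ?U)" unfolding g_def by auto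
          also have "p ` ?U = ?U" using permutes_image[OF p[simplified]] .
          also have "pick \<beta> ` ?U = \<beta>" using bij_betw_imp_surj_on[OF pb] .
          finally show ?thesis .
        qed
        ultimately show ?thesis by auto
      qed
    next
      fix f assume f: "f \<in> {f\<in>?Fi. f ` ?U = \<beta>}"
      have fF: "f \<in> ?Fi \<and> f ` ?U = \<beta>" using f by (rule CollectD)
      have fF2: "f \<in> ?Fs \<and> inj_on f ?U" using conjunct1[OF fF] by (rule CollectD)
      have f1: "f \<in> ?Fs" "inj_on f ?U" "f ` ?U = \<beta>" using fF fF2 by simp_all
      have fi: "i < r \<Longrightarrow> f i \<in> \<beta>" for i using f1(3) by auto
      have fo: "i \<ge> r \<Longrightarrow> f i = i" for i using f1(1) by simp
      show "g (h f) = f"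
      proof
        fix i show "g (h f) i = f i"
        proof (cases "i < r")
          case True
          have c: "card {a\<in>\<beta>. a < f i} < r" using card_less_pick[OF fb fi[OF True]] b(2) by simp
          have "pick \<beta> (card {a\<in>\<beta>. a < f i}) = f i" using pick_card_in_set[OF fi[OF True]] .
          thus ?thesis using True c unfolding g_def h_def by simp
        next
          case False thus ?thesis using fo[of i] unfolding g_def h_def by simp
        qed
      qed
      show "h f \<in> ?P"
      proof -
        have hU: "h f ` ?U \<subseteq> ?U"
        proof
          fix y assume "y \<in> h f ` ?U"
          then obtain i where i: "i < r" "y = h f i" by auto
          have "card {a\<in>\<beta>. a < f i} < r" using card_less_pick[OF fb fi[OF i(1)]] b(2) by simp
          thus "y \<in> ?U" using i unfolding h_def by simp
        qed
        have "inj_on (h f) ?U"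
        proof (rule inj_onI)
          fix x y assume xy: "x \<in> ?U" "y \<in> ?U" "h f x = h f y"
          have xr: "x < r" "y < r" using xy(1,2) by auto
          have hx: "h f x = card {a\<in>\<beta>. a < f x}" "h f y = card {a\<in>\<beta>. a < f y}"
            using xr unfolding h_def by simp_all
          have "f x = pick \<beta> (h f x)" unfolding hx(1) using pick_card_in_set[OF fi[OF xr(1)]] by simp
          also have "\<dots> = pick \<beta> (h f y)" using xy(3) by simp
          also have "\<dots> = f y" unfolding hx(2) using pick_card_in_set[OF fi[OF xr(2)]] by simp
          finally have "f x = f y" .
          thus "x = y" using inj_onD[OF f1(2)] xy by blast
        qed
        hence "h f ` ?U = ?U" using endo_inj_surj[OF _ hU] by simp
        hence "bij_betw (h f) ?U ?U" using \<open>inj_on (h f) ?U\<close> unfolding bij_betw_def by simp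
        moreover have "\<And>i. i \<notin> ?U \<Longrightarrow> h f i = i" unfolding h_def by simp
        ultimately show ?thesis using bij_imp_permutes by blast
      qed
    qed simp
    finally show ?thesis by simp
  qed
  show ?thesis unfolding step1 step2 step3 using step4 by (intro sum.cong refl) auto
qed

lemma rank_one_det:
  fixes K Ki :: "'a::field mat"
  assumes K: "K \<in> carrier_mat r r" and Ki: "Ki \<in> carrier_mat r r" and KKi: "K * Ki = 1\<^sub>m r"
    and x: "x \<in> carrier_vec r" and f: "f \<in> carrier_vec r"
  shows "det (K + mat r r (\<lambda>(p,q). x $ p * f $ q)) = det K * (1 + f \<bullet> (Ki *\<^sub>v x))"
proof -
  define Om where "Om = mat r r (\<lambda>(p,q). x $ p * f $ q)"
  define a where "a = 1 + f \<bullet> (Ki *\<^sub>v x)"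
  define fr where "fr = mat 1 r (\<lambda>(_,q). - f $ q)"
  define xc where "xc = mat r 1 (\<lambda>(p,_). x $ p)"
  define yc where "yc = mat r 1 (\<lambda>(p,_). (Ki *\<^sub>v x) $ p)"
  define A1 where "A1 = (mat 1 1 (\<lambda>_. a) :: 'a mat)"
  have Om: "Om \<in> carrier_mat r r" and fr: "fr \<in> carrier_mat 1 r" and xc: "xc \<in> carrier_mat r 1"
    and yc: "yc \<in> carrier_mat r 1" and A1: "A1 \<in> carrier_mat 1 1"
    unfolding Om_def fr_def xc_def yc_def A1_def by auto
  have KOm: "K + Om \<in> carrier_mat r r" using K Om by simp
  define BIG where "BIG = four_block_mat (1\<^sub>m 1) fr xc K"
  have xcfr: "xc * fr = - Om"
    by (rule eq_matI, insert x f, auto simp: xc_def fr_def Om_def scalar_prod_def)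
  have f1: "BIG = four_block_mat (1\<^sub>m 1) (0\<^sub>m 1 r) xc (1\<^sub>m r) * four_block_mat (1\<^sub>m 1) fr (0\<^sub>m r 1) (K + Om)"
  proof -
    have "four_block_mat (1\<^sub>m 1) (0\<^sub>m 1 r) xc (1\<^sub>m r) * four_block_mat (1\<^sub>m 1) fr (0\<^sub>m r 1) (K + Om)
      = four_block_mat (1\<^sub>m 1 * 1\<^sub>m 1 + 0\<^sub>m 1 r * 0\<^sub>m r 1) (1\<^sub>m 1 * fr + 0\<^sub>m 1 r * (K + Om))
          (xc * 1\<^sub>m 1 + 1\<^sub>m r * 0\<^sub>m r 1) (xc * fr + 1\<^sub>m r * (K + Om))"
      by (rule mult_four_block_mat, insert fr xc KOm, auto)
    also have "1\<^sub>m 1 * 1\<^sub>m 1 + 0\<^sub>m 1 r * 0\<^sub>m r 1 = (1\<^sub>m 1 :: 'a mat)" by auto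
    also have "1\<^sub>m 1 * fr + 0\<^sub>m 1 r * (K + Om) = fr" using fr KOm by (simp add: left_mult_zero_mat[OF KOm])
    also have "xc * 1\<^sub>m 1 + 1\<^sub>m r * 0\<^sub>m r 1 = xc" using xc by simp
    also have "xc * fr + 1\<^sub>m r * (K + Om) = K"
    proof -
      have "xc * fr + 1\<^sub>m r * (K + Om) = - Om + (K + Om)" using xcfr KOm by (simp add: left_mult_one_mat[OF KOm])
      also have "\<dots> = K" using K Om by (metis (no_types, lifting) add_carrier_mat uminus_carrier_iff_mat
          assoc_add_mat comm_add_mat left_add_zero_mat uminus_l_inv_mat)
      finally show ?thesis .
    qed
    finally show ?thesis unfolding BIG_def by simp
  qed
  have f2: "BIG = four_block_mat A1 fr (0\<^sub>m r 1) K * four_block_mat (1\<^sub>m 1) (0\<^sub>m 1 r) yc (1\<^sub>m r)"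
  proof -
    have "four_block_mat A1 fr (0\<^sub>m r 1) K * four_block_mat (1\<^sub>m 1) (0\<^sub>m 1 r) yc (1\<^sub>m r)
      = four_block_mat (A1 * 1\<^sub>m 1 + fr * yc) (A1 * 0\<^sub>m 1 r + fr * 1\<^sub>m r)
          (0\<^sub>m r 1 * 1\<^sub>m 1 + K * yc) (0\<^sub>m r 1 * 0\<^sub>m 1 r + K * 1\<^sub>m r)"
      by (rule mult_four_block_mat, insert fr yc K A1, auto)
    also have "A1 * 1\<^sub>m 1 + fr * yc = 1\<^sub>m 1"
    proof (rule eq_matI)
      have Kix: "Ki *\<^sub>v x \<in> carrier_vec r" using Ki x by simp
      have "(fr * yc) $$ (0,0) = - (f \<bullet> (Ki *\<^sub>v x))"
      proof -
        define y where "y = Ki *\<^sub>v x"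
        have y: "y \<in> carrier_vec r" using Kix unfolding y_def .
        have "(fr * yc) $$ (0,0) = (\<Sum>i = 0..<r. (- f $ i) * y $ i)"
          unfolding fr_def yc_def y_def[symmetric] by (simp add: scalar_prod_def)
        also have "\<dots> = - (f \<bullet> y)" using f y unfolding scalar_prod_def by (simp add: sum_negf)
        finally show ?thesis unfolding y_def .
      qed
      thus "\<And>i j. i < dim_row (1\<^sub>m 1) \<Longrightarrow> j < dim_col (1\<^sub>m 1) \<Longrightarrow> (A1 * 1\<^sub>m 1 + fr * yc) $$ (i, j) = (1\<^sub>m 1 :: 'a mat) $$ (i, j)"
        using A1 fr yc by (simp add: A1_def a_def)
    qed (insert A1 fr yc, auto)
    also have "A1 * 0\<^sub>m 1 r + fr * 1\<^sub>m r = fr" using A1 fr by simp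
    also have "0\<^sub>m r 1 * 1\<^sub>m 1 + K * yc = xc"
    proof -
      have "K * yc = xc"
      proof (rule eq_matI)
        fix i j assume ij: "i < dim_row xc" "j < dim_col xc"
        hence ij': "i < r" "j = 0" unfolding xc_def by auto
        have "yc = mat_of_cols r [Ki *\<^sub>v x]" unfolding yc_def mat_of_cols_def by auto
        hence "K * yc = mat_of_cols r [K *\<^sub>v (Ki *\<^sub>v x)]" using K Ki x
          by (simp add: mat_of_cols_def mat_eq_iff scalar_prod_def)
        also have "K *\<^sub>v (Ki *\<^sub>v x) = x" using K Ki x KKi
          by (metis assoc_mult_mat_vec one_mult_mat_vec)
        finally show "(K * yc) $$ (i, j) = xc $$ (i, j)" using ij' x unfolding xc_def by (simp add: mat_of_cols_def)
      qed (insert K yc xc, auto)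
      thus ?thesis using K yc xc by simp
    qed
    also have "0\<^sub>m r 1 * 0\<^sub>m 1 r + K * 1\<^sub>m r = K" using K by simp
    finally show ?thesis unfolding BIG_def by simp
  qed
  have d1: "det BIG = det (K + Om)"
  proof -
    have c1: "four_block_mat (1\<^sub>m 1) (0\<^sub>m 1 r) xc (1\<^sub>m r) \<in> carrier_mat (1 + r) (1 + r)"
      using xc by (intro four_block_carrier_mat) auto
    have c2: "four_block_mat (1\<^sub>m 1) fr (0\<^sub>m r 1) (K + Om) \<in> carrier_mat (1 + r) (1 + r)"
      using KOm by (intro four_block_carrier_mat) auto
    have "det BIG = det (four_block_mat (1\<^sub>m 1) (0\<^sub>m 1 r) xc (1\<^sub>m r)) * det (four_block_mat (1\<^sub>m 1) fr (0\<^sub>m r 1) (K + Om))"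
      unfolding f1 by (rule det_mult[OF c1 c2])
    also have "det (four_block_mat (1\<^sub>m 1) (0\<^sub>m 1 r) xc (1\<^sub>m r)) = det (1\<^sub>m 1 :: 'a mat) * det (1\<^sub>m r :: 'a mat)"
      by (rule det_four_block_mat_upper_right_zero, insert xc, auto)
    also have "det (four_block_mat (1\<^sub>m 1) fr (0\<^sub>m r 1) (K + Om)) = det (1\<^sub>m 1 :: 'a mat) * det (K + Om)"
      by (rule det_four_block_mat_lower_left_zero, insert fr KOm, auto)
    finally show ?thesis by simp
  qed
  have d2: "det BIG = a * det K"
  proof -
    have c1: "four_block_mat A1 fr (0\<^sub>m r 1) K \<in> carrier_mat (1 + r) (1 + r)"
      using A1 K by (intro four_block_carrier_mat) auto
    have c2: "four_block_mat (1\<^sub>m 1) (0\<^sub>m 1 r) yc (1\<^sub>m r) \<in> carrier_mat (1 + r) (1 + r)"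
      using yc by (intro four_block_carrier_mat) auto
    have "det BIG = det (four_block_mat A1 fr (0\<^sub>m r 1) K) * det (four_block_mat (1\<^sub>m 1) (0\<^sub>m 1 r) yc (1\<^sub>m r))"
      unfolding f2 by (rule det_mult[OF c1 c2])
    also have "det (four_block_mat A1 fr (0\<^sub>m r 1) K) = det A1 * det K"
      by (rule det_four_block_mat_lower_left_zero, insert fr K A1, auto)
    also have "det (four_block_mat (1\<^sub>m 1) (0\<^sub>m 1 r) yc (1\<^sub>m r)) = det (1\<^sub>m 1 :: 'a mat) * det (1\<^sub>m r :: 'a mat)"
      by (rule det_four_block_mat_upper_right_zero, insert yc, auto)
    also have "det A1 = a" unfolding A1_def by (subst det_single) auto
    finally show ?thesis by simp
  qed
  show ?thesis using d1 d2 unfolding Om_def a_def by (simp add: mult.commute)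
qed

lemma principal_sub_mult:
  fixes F G :: "'a::comm_ring_1 mat"
  assumes F: "F \<in> carrier_mat n r" and G: "G \<in> carrier_mat r n" and b: "\<beta> \<subseteq> {0..<n}"
  shows "principal_sub (F * G) \<beta> = submatrix F \<beta> UNIV * submatrix G UNIV \<beta>"
proof -
  have FG: "F * G \<in> carrier_mat n n" using F G by simp
  have S1: "{i. i < n \<and> i \<in> \<beta>} = \<beta>" using b by auto
  have Fb: "submatrix F \<beta> UNIV \<in> carrier_mat (card \<beta>) r" by (rule submatrix_rows_carrier[OF F b])
  have Gb: "submatrix G UNIV \<beta> \<in> carrier_mat r (card \<beta>)" by (rule submatrix_cols_carrier[OF G b])
  have fb: "finite \<beta>" using b finite_subset by blast
  show ?thesis
  proof (rule eq_matI)
    show "dim_row (principal_sub (F * G) \<beta>) = dim_row (submatrix F \<beta> UNIV * submatrix G UNIV \<beta>)"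
      using Fb FG S1 unfolding principal_sub_def submatrix_def by simp
    show "dim_col (principal_sub (F * G) \<beta>) = dim_col (submatrix F \<beta> UNIV * submatrix G UNIV \<beta>)"
      using Gb FG S1 unfolding principal_sub_def submatrix_def by simp
    fix i j assume "i < dim_row (submatrix F \<beta> UNIV * submatrix G UNIV \<beta>)"
      "j < dim_col (submatrix F \<beta> UNIV * submatrix G UNIV \<beta>)"
    hence ij: "i < card \<beta>" "j < card \<beta>" using Fb Gb by auto
    have pi: "pick \<beta> i < n" "pick \<beta> j < n" using pick_in_set_le[OF ij(1)] pick_in_set_le[OF ij(2)] b by auto
    have "principal_sub (F * G) \<beta> $$ (i,j) = (F * G) $$ (pick \<beta> i, pick \<beta> j)"
      unfolding principal_sub_def using submatrix_index[of i "F*G" \<beta> j \<beta>] FG S1 ij F G by simp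
    also have "\<dots> = (\<Sum>l = 0..<r. F $$ (pick \<beta> i, l) * G $$ (l, pick \<beta> j))"
      using F G pi by (simp add: scalar_prod_def)
    also have "\<dots> = (\<Sum>l = 0..<r. submatrix F \<beta> UNIV $$ (i, l) * submatrix G UNIV \<beta> $$ (l, j))"
      using submatrix_rows_index[OF F b ij(1)] submatrix_cols_index[OF G b _ ij(2)] by simp
    also have "\<dots> = (submatrix F \<beta> UNIV * submatrix G UNIV \<beta>) $$ (i,j)"
      using Fb Gb ij by (simp add: scalar_prod_def)
    finally show "principal_sub (F * G) \<beta> $$ (i, j) = (submatrix F \<beta> UNIV * submatrix G UNIV \<beta>) $$ (i, j)" .
  qed
qed

lemma replace_col_mult:
  fixes F G :: "'a::comm_ring_1 mat"
  assumes F: "F \<in> carrier_mat n r" and G: "G \<in> carrier_mat r n" and w: "w \<in> carrier_vec r" and i: "i < n"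
  shows "replace_col (F * G) (F *\<^sub>v w) i = F * replace_col G w i"
proof (rule eq_matI)
  fix l q assume lq: "l < dim_row (F * replace_col G w i)" "q < dim_col (F * replace_col G w i)"
  hence lq': "l < n" "q < n" using F G by (auto simp: replace_col_def)
  have c: "col (replace_col G w i) q = (if q = i then w else col G q)"
    using G w lq' by (auto simp: replace_col_def)
  show "replace_col (F * G) (F *\<^sub>v w) i $$ (l, q) = (F * replace_col G w i) $$ (l, q)"
    using lq' F G w c by (auto simp: replace_col_def)
qed (insert F G, auto simp: replace_col_def)

lemma det_zero_row_sub:
  fixes F :: "'a::comm_ring_1 mat"
  assumes F: "F \<in> carrier_mat n r" and b: "\<beta> \<subseteq> {0..<n}" "card \<beta> = r" and ib: "i \<in> \<beta>"
    and z: "\<And>q. q < r \<Longrightarrow> F $$ (i, q) = 0"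
  shows "det (submatrix F \<beta> UNIV) = 0"
proof -
  have fb: "finite \<beta>" using b finite_subset by blast
  have S: "submatrix F \<beta> UNIV \<in> carrier_mat r r" using submatrix_rows_carrier[OF F b(1)] b(2) by simp
  define p where "p = card {a\<in>\<beta>. a < i}"
  have p: "p < r" using card_less_pick[OF fb ib] b(2) unfolding p_def by simp
  have pp: "pick \<beta> p = i" unfolding p_def by (rule pick_card_in_set[OF ib])
  have row0: "submatrix F \<beta> UNIV $$ (p, q) = 0" if "q < r" for q
    using submatrix_rows_index[OF F b(1), of p q] p b(2) that pp z by simp
  show ?thesis unfolding det_def'[OF S]
  proof (rule sum.neutral, rule ballI)
    fix s assume s: "s \<in> {s. s permutes {0..<r}}"
    have "s p < r" using permutes_in_image[of s "{0..<r}" p] s p by auto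
    hence "submatrix F \<beta> UNIV $$ (p, s p) = 0" using row0 by simp
    hence "(\<Prod>i = 0..<r. submatrix F \<beta> UNIV $$ (i, s i)) = 0"
      using p by (intro prod_zero bexI[of _ p]) auto
    thus "signof s * (\<Prod>i = 0..<r. submatrix F \<beta> UNIV $$ (i, s i)) = 0" by simp
  qed
qed

lemma submatrix_rows_cong:
  fixes F F' :: "'a mat"
  assumes F: "F \<in> carrier_mat n r" and F': "F' \<in> carrier_mat n r" and b: "\<beta> \<subseteq> {0..<n}"
    and eq: "\<And>l q. l \<in> \<beta> \<Longrightarrow> q < r \<Longrightarrow> F' $$ (l,q) = F $$ (l,q)"
  shows "submatrix F' \<beta> UNIV = submatrix F \<beta> UNIV"
proof (rule eq_matI)
  fix i j assume "i < dim_row (submatrix F \<beta> UNIV)" "j < dim_col (submatrix F \<beta> UNIV)"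
  hence ij: "i < card \<beta>" "j < r" using submatrix_rows_carrier[OF F b] by auto
  show "submatrix F' \<beta> UNIV $$ (i, j) = submatrix F \<beta> UNIV $$ (i, j)"
    using submatrix_rows_index[OF F b ij] submatrix_rows_index[OF F' b ij] eq[OF pick_in_set_le[OF ij(1)] ij(2)]
    by simp
qed (insert submatrix_rows_carrier[OF F b] submatrix_rows_carrier[OF F' b], auto)

lemma idx_sets_finite: "finite (idx_sets r n)"
  unfolding idx_sets_def by (rule finite_subset[of _ "Pow {0..<n}"], auto)

lemma cb_with:
  fixes H F :: "'a::comm_ring_1 mat"
  assumes H: "H \<in> carrier_mat r n" and F: "F \<in> carrier_mat n r" and i: "i < n"
  defines "F' \<equiv> mat n r (\<lambda>(l,q). if l = i then 0 else F $$ (l,q))"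
  shows "(\<Sum>\<beta>\<in>idx_sets_with r n i. det (submatrix H UNIV \<beta>) * det (submatrix F \<beta> UNIV))
    = det (H * F) - det (H * F')"
proof -
  have F': "F' \<in> carrier_mat n r" unfolding F'_def by simp
  have "det (H * F) - det (H * F') = (\<Sum>\<beta>\<in>idx_sets r n. det (submatrix H UNIV \<beta>) * det (submatrix F \<beta> UNIV)
       - det (submatrix H UNIV \<beta>) * det (submatrix F' \<beta> UNIV))"
    unfolding cauchy_binet[OF H F] cauchy_binet[OF H F'] by (simp add: sum_subtractf)
  also have "\<dots> = (\<Sum>\<beta>\<in>idx_sets_with r n i. det (submatrix H UNIV \<beta>) * det (submatrix F \<beta> UNIV))"
  proof (rule sum.mono_neutral_cong_right[OF idx_sets_finite])
    show "idx_sets_with r n i \<subseteq> idx_sets r n" unfolding idx_sets_with_def by auto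
    show "\<forall>\<beta>\<in>idx_sets r n - idx_sets_with r n i. det (submatrix H UNIV \<beta>) * det (submatrix F \<beta> UNIV)
       - det (submatrix H UNIV \<beta>) * det (submatrix F' \<beta> UNIV) = 0"
    proof
      fix \<beta> assume "\<beta> \<in> idx_sets r n - idx_sets_with r n i"
      hence b: "\<beta> \<subseteq> {0..<n}" "i \<notin> \<beta>" unfolding idx_sets_with_def idx_sets_def by auto
      have "submatrix F' \<beta> UNIV = submatrix F \<beta> UNIV"
        by (rule submatrix_rows_cong[OF F F' b(1)], insert b, auto simp: F'_def)
      thus "det (submatrix H UNIV \<beta>) * det (submatrix F \<beta> UNIV)
       - det (submatrix H UNIV \<beta>) * det (submatrix F' \<beta> UNIV) = 0" by simp
    qed
    fix \<beta> assume "\<beta> \<in> idx_sets_with r n i"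
    hence b: "\<beta> \<subseteq> {0..<n}" "card \<beta> = r" "i \<in> \<beta>" unfolding idx_sets_with_def idx_sets_def by auto
    have "det (submatrix F' \<beta> UNIV) = 0"
      by (rule det_zero_row_sub[OF F' b], insert i, simp add: F'_def)
    thus "det (submatrix H UNIV \<beta>) * det (submatrix F \<beta> UNIV)
       - det (submatrix H UNIV \<beta>) * det (submatrix F' \<beta> UNIV) =
       det (submatrix H UNIV \<beta>) * det (submatrix F \<beta> UNIV)" by simp
  qed
  finally show ?thesis by simp
qed

lemma cb_principal:
  fixes F G :: "'a::comm_ring_1 mat"
  assumes F: "F \<in> carrier_mat n r" and G: "G \<in> carrier_mat r n"
  shows "(\<Sum>\<beta>\<in>idx_sets r n. det (principal_sub (F * G) \<beta>)) = det (G * F)"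
proof -
  have "(\<Sum>\<beta>\<in>idx_sets r n. det (principal_sub (F * G) \<beta>))
     = (\<Sum>\<beta>\<in>idx_sets r n. det (submatrix G UNIV \<beta>) * det (submatrix F \<beta> UNIV))"
  proof (rule sum.cong[OF refl])
    fix \<beta> assume "\<beta> \<in> idx_sets r n"
    hence b: "\<beta> \<subseteq> {0..<n}" "card \<beta> = r" unfolding idx_sets_def by auto
    have Fb: "submatrix F \<beta> UNIV \<in> carrier_mat r r" using submatrix_rows_carrier[OF F b(1)] b(2) by simp
    have Gb: "submatrix G UNIV \<beta> \<in> carrier_mat r r" using submatrix_cols_carrier[OF G b(1)] b(2) by simp
    show "det (principal_sub (F * G) \<beta>) = det (submatrix G UNIV \<beta>) * det (submatrix F \<beta> UNIV)"
      unfolding principal_sub_mult[OF F G b(1)] det_mult[OF Fb Gb] by simp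
  qed
  also have "\<dots> = det (G * F)" by (rule cauchy_binet[OF G F, symmetric])
  finally show ?thesis .
qed

lemma main_col:
  fixes F G Ki :: "'a::field mat"
  assumes F: "F \<in> carrier_mat n r" and G: "G \<in> carrier_mat r n" and Ki: "Ki \<in> carrier_mat r r"
    and KKi: "(G * F) * Ki = 1\<^sub>m r" and w: "w \<in> carrier_vec r" and i: "i < n"
  shows "(\<Sum>\<beta>\<in>idx_sets_with r n i. det (principal_sub (replace_col (F * G) (F *\<^sub>v w) i) \<beta>))
    = det (G * F) * (row F i \<bullet> (Ki *\<^sub>v w))"
proof -
  define G' where "G' = replace_col G w i"
  define F' where "F' = mat n r (\<lambda>(l,q). if l = i then 0 else F $$ (l,q))"
  define K where "K = G * F"
  define g where "g = col G i"
  define f where "f = row F i"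
  have G': "G' \<in> carrier_mat r n" using G unfolding G'_def replace_col_def by auto
  have F': "F' \<in> carrier_mat n r" unfolding F'_def by auto
  have K: "K \<in> carrier_mat r r" using F G unfolding K_def by auto
  have g: "g \<in> carrier_vec r" using G i unfolding g_def by auto
  have f: "f \<in> carrier_vec r" using F i unfolding f_def by auto
  have KKi': "K * Ki = 1\<^sub>m r" using KKi unfolding K_def .
  have "(\<Sum>\<beta>\<in>idx_sets_with r n i. det (principal_sub (replace_col (F * G) (F *\<^sub>v w) i) \<beta>))
     = (\<Sum>\<beta>\<in>idx_sets_with r n i. det (submatrix G' UNIV \<beta>) * det (submatrix F \<beta> UNIV))"
  proof (rule sum.cong[OF refl])
    fix \<beta> assume "\<beta> \<in> idx_sets_with r n i"
    hence b: "\<beta> \<subseteq> {0..<n}" "card \<beta> = r" unfolding idx_sets_with_def idx_sets_def by auto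
    have Fb: "submatrix F \<beta> UNIV \<in> carrier_mat r r" using submatrix_rows_carrier[OF F b(1)] b(2) by simp
    have Gb: "submatrix G' UNIV \<beta> \<in> carrier_mat r r" using submatrix_cols_carrier[OF G' b(1)] b(2) by simp
    show "det (principal_sub (replace_col (F * G) (F *\<^sub>v w) i) \<beta>) = det (submatrix G' UNIV \<beta>) * det (submatrix F \<beta> UNIV)"
      unfolding replace_col_mult[OF F G w i] G'_def[symmetric] principal_sub_mult[OF F G' b(1)] det_mult[OF Fb Gb]
      by simp
  qed
  also have "\<dots> = det (G' * F) - det (G' * F')"
    unfolding F'_def by (rule cb_with[OF G' F i])
  also have "G' * F = K + mat r r (\<lambda>(p,q). (w - g) $ p * f $ q)"
  proof (rule eq_matI)
    fix p q assume "p < dim_row (K + mat r r (\<lambda>(p,q). (w - g) $ p * f $ q))"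
      "q < dim_col (K + mat r r (\<lambda>(p,q). (w - g) $ p * f $ q))"
    hence pq: "p < r" "q < r" using K by auto
    have "(G' * F) $$ (p,q) = (\<Sum>l = 0..<n. (if l = i then w $ p else G $$ (p,l)) * F $$ (l,q))"
      using G' F G pq unfolding G'_def by (simp add: scalar_prod_def replace_col_def)
    also have "\<dots> = (\<Sum>l = 0..<n. G $$ (p,l) * F $$ (l,q) + (if l = i then (w $ p - G $$ (p,l)) * F $$ (l,q) else 0))"
      by (rule sum.cong, auto simp: algebra_simps)
    also have "\<dots> = (\<Sum>l = 0..<n. G $$ (p,l) * F $$ (l,q)) + (w $ p - G $$ (p,i)) * F $$ (i,q)"
      using i by (simp add: sum.distrib)
    also have "\<dots> = (K + mat r r (\<lambda>(p,q). (w - g) $ p * f $ q)) $$ (p,q)"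
      using pq K F G w g f i unfolding K_def g_def f_def by (simp add: scalar_prod_def)
    finally show "(G' * F) $$ (p,q) = (K + mat r r (\<lambda>(p,q). (w - g) $ p * f $ q)) $$ (p,q)" .
  qed (insert G' F K, auto)
  also have "G' * F' = K + mat r r (\<lambda>(p,q). (0\<^sub>v r - g) $ p * f $ q)"
  proof (rule eq_matI)
    fix p q assume "p < dim_row (K + mat r r (\<lambda>(p,q). (0\<^sub>v r - g) $ p * f $ q))"
      "q < dim_col (K + mat r r (\<lambda>(p,q). (0\<^sub>v r - g) $ p * f $ q))"
    hence pq: "p < r" "q < r" using K by auto
    have "(G' * F') $$ (p,q) = (\<Sum>l = 0..<n. G' $$ (p,l) * (if l = i then 0 else F $$ (l,q)))"
      using G' F' pq unfolding F'_def by (simp add: scalar_prod_def)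
    also have "\<dots> = (\<Sum>l = 0..<n. G $$ (p,l) * F $$ (l,q) + (if l = i then - G $$ (p,l) * F $$ (l,q) else 0))"
      using G pq by (intro sum.cong) (auto simp: G'_def replace_col_def)
    also have "\<dots> = (\<Sum>l = 0..<n. G $$ (p,l) * F $$ (l,q)) + (- G $$ (p,i)) * F $$ (i,q)"
      using i by (simp add: sum.distrib)
    also have "\<dots> = (K + mat r r (\<lambda>(p,q). (0\<^sub>v r - g) $ p * f $ q)) $$ (p,q)"
      using pq K F G g f i unfolding K_def g_def f_def by (simp add: scalar_prod_def)
    finally show "(G' * F') $$ (p,q) = (K + mat r r (\<lambda>(p,q). (0\<^sub>v r - g) $ p * f $ q)) $$ (p,q)" .
  qed (insert G' F' K, auto)
  also have "det (K + mat r r (\<lambda>(p,q). (w - g) $ p * f $ q)) = det K * (1 + f \<bullet> (Ki *\<^sub>v (w - g)))"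
    by (rule rank_one_det[OF K Ki KKi'], insert w g f, auto)
  also have "det (K + mat r r (\<lambda>(p,q). (0\<^sub>v r - g) $ p * f $ q)) = det K * (1 + f \<bullet> (Ki *\<^sub>v (0\<^sub>v r - g)))"
    by (rule rank_one_det[OF K Ki KKi'], insert g f, auto)
  also have "det K * (1 + f \<bullet> (Ki *\<^sub>v (w - g))) - det K * (1 + f \<bullet> (Ki *\<^sub>v (0\<^sub>v r - g)))
      = det K * (f \<bullet> (Ki *\<^sub>v w))"
  proof -
    have kw: "Ki *\<^sub>v w \<in> carrier_vec r" "Ki *\<^sub>v g \<in> carrier_vec r" "Ki *\<^sub>v 0\<^sub>v r \<in> carrier_vec r"
      using Ki w g by auto
    have k0: "Ki *\<^sub>v 0\<^sub>v r = 0\<^sub>v r" using Ki by (intro eq_vecI) (auto simp: scalar_prod_def)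
    have e1: "f \<bullet> (Ki *\<^sub>v (w - g)) = f \<bullet> (Ki *\<^sub>v w) - f \<bullet> (Ki *\<^sub>v g)"
      using mult_minus_distrib_mat_vec[OF Ki w g] scalar_prod_minus_distrib[OF f kw(1,2)] by simp
    have e2: "f \<bullet> (Ki *\<^sub>v (0\<^sub>v r - g)) = - (f \<bullet> (Ki *\<^sub>v g))"
      using mult_minus_distrib_mat_vec[OF Ki _ g, of "0\<^sub>v r"] scalar_prod_minus_distrib[OF f kw(3,2)] k0 f by simp
    show ?thesis unfolding e1 e2 by (simp add: algebra_simps)
  qed
  finally show ?thesis unfolding K_def f_def .
qed

lemma replace_row_transpose:
  "replace_row M v j = transpose_mat (replace_col (transpose_mat M) v j)"
  by (rule eq_matI, auto simp: replace_row_def replace_col_def)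

lemma principal_sub_transpose:
  assumes N: "N \<in> carrier_mat n n"
  shows "principal_sub (transpose_mat N) \<alpha> = transpose_mat (principal_sub N \<alpha>)"
  using N unfolding principal_sub_def submatrix_def by (intro eq_matI) (auto simp: pick_le)

lemma principal_sub_carrier:
  assumes N: "N \<in> carrier_mat n n"
  shows "principal_sub N \<alpha> \<in> carrier_mat (card {i. i < n \<and> i \<in> \<alpha>}) (card {i. i < n \<and> i \<in> \<alpha>})"
  using N unfolding principal_sub_def submatrix_def by auto

lemma main_row:
  fixes F G Ki :: "'a::field mat"
  assumes F: "F \<in> carrier_mat n r" and G: "G \<in> carrier_mat r n" and Ki: "Ki \<in> carrier_mat r r"
    and KKi: "(G * F) * Ki = 1\<^sub>m r" and p: "p \<in> carrier_vec r" and j: "j < n"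
  shows "(\<Sum>\<alpha>\<in>idx_sets_with r n j. det (principal_sub (replace_row (F * G) (transpose_mat G *\<^sub>v p) j) \<alpha>))
    = det (G * F) * (col G j \<bullet> (transpose_mat Ki *\<^sub>v p))"
proof -
  have GF: "G * F \<in> carrier_mat r r" using G F by simp
  have KiK: "Ki * (G * F) = 1\<^sub>m r" by (rule mat_mult_left_right_inverse[OF GF Ki KKi])
  have Ft: "transpose_mat F \<in> carrier_mat r n" using F by simp
  have Gt: "transpose_mat G \<in> carrier_mat n r" using G by simp
  have Kit: "transpose_mat Ki \<in> carrier_mat r r" using Ki by simp
  have K2: "(transpose_mat F * transpose_mat G) * transpose_mat Ki = 1\<^sub>m r"
  proof -
    have "transpose_mat F * transpose_mat G = transpose_mat (G * F)" using transpose_mult[OF G F] by simp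
    hence "(transpose_mat F * transpose_mat G) * transpose_mat Ki = transpose_mat (Ki * (G * F))"
      using transpose_mult[OF Ki GF] by simp
    thus ?thesis using KiK by simp
  qed
  have FG: "F * G \<in> carrier_mat n n" using F G by simp
  have tFG: "transpose_mat (F * G) = transpose_mat G * transpose_mat F" by (rule transpose_mult[OF F G])
  have "(\<Sum>\<alpha>\<in>idx_sets_with r n j. det (principal_sub (replace_row (F * G) (transpose_mat G *\<^sub>v p) j) \<alpha>))
    = (\<Sum>\<alpha>\<in>idx_sets_with r n j. det (principal_sub (replace_col (transpose_mat G * transpose_mat F) (transpose_mat G *\<^sub>v p) j) \<alpha>))"
  proof (rule sum.cong[OF refl])
    fix \<alpha>
    let ?N = "replace_col (transpose_mat G * transpose_mat F) (transpose_mat G *\<^sub>v p) j"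
    have N: "?N \<in> carrier_mat n n" using Gt Ft unfolding replace_col_def by auto
    have "principal_sub (replace_row (F * G) (transpose_mat G *\<^sub>v p) j) \<alpha> = principal_sub (transpose_mat ?N) \<alpha>"
      unfolding replace_row_transpose tFG ..
    also have "\<dots> = transpose_mat (principal_sub ?N \<alpha>)" by (rule principal_sub_transpose[OF N])
    finally show "det (principal_sub (replace_row (F * G) (transpose_mat G *\<^sub>v p) j) \<alpha>) = det (principal_sub ?N \<alpha>)"
      using det_transpose[OF principal_sub_carrier[OF N]] by simp
  qed
  also have "\<dots> = det (transpose_mat F * transpose_mat G) * (row (transpose_mat G) j \<bullet> (transpose_mat Ki *\<^sub>v p))"
    by (rule main_col[OF Gt Ft Kit K2 p j])
  also have "det (transpose_mat F * transpose_mat G) = det (G * F)"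
    using transpose_mult[OF G F] det_transpose[OF GF] by simp
  also have "row (transpose_mat G) j = col G j" using G j by simp
  finally show ?thesis .
qed

lemma (in vec_space) lin_indpt_empty': "lin_indpt {}"
  by (metis (no_types) empty_subsetI fin_dim finite_basis_exists subset_li_is_li vec_vs vectorspace.basis_def)

lemma (in vec_space) basis_of_colspace:
  assumes M: "M \<in> carrier_mat n nc" and N: "N \<in> carrier_mat n nc'"
    and sub: "set (cols M) \<subseteq> span (set (cols N))" and rk: "rank M = rank N"
  shows "\<exists>bs. distinct bs \<and> set bs \<subseteq> set (cols M) \<and> lin_indpt (set bs) \<and> length bs = rank N
     \<and> set (cols N) \<subseteq> span (set bs)"
proof -
  let ?P = "\<lambda>T. T \<subseteq> set (cols M) \<and> lin_indpt T"
  obtain S where fS: "finite S" and max: "maximal S ?P"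
    using maximal_exists_superset[of "set (cols M)" ?P "{}"] lin_indpt_empty' by auto
  have cS: "card S = rank M" using rank_card_indpt[OF M max] by simp
  have SM: "S \<subseteq> set (cols M)" and liS: "lin_indpt S" using max unfolding maximal_def by auto
  let ?W = "span (set (cols N))"
  have cN: "set (cols N) \<subseteq> carrier_vec n" using N cols_dim by blast
  have subW: "VectorSpace.subspace class_ring ?W V" using span_is_subspace[of "set (cols N)"] cN by simp
  have submW: "submodule class_ring ?W V" using span_is_submodule[of "set (cols N)"] cN by simp
  have vsW: "vectorspace class_ring (vs ?W)" by (rule subspace_is_vs[OF subW])
  have fdW: "vectorspace.fin_dim class_ring (vs ?W)" by (rule fin_dim_span_cols[OF N])
  have dimW: "vectorspace.dim class_ring (vs ?W) = rank N" unfolding rank_def by simp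
  have SW: "S \<subseteq> ?W" using SM sub by auto
  have liW: "LinearCombinations.module.lin_indpt class_ring (vs ?W) S"
    using span_li_not_depend(2)[OF SW submW] liS by simp
  have "vectorspace.basis class_ring (vs ?W) S"
    by (rule vectorspace.dim_li_is_basis[OF vsW fdW fS], insert SW liW cS rk dimW, auto)
  hence "LinearCombinations.module.span class_ring (vs ?W) S = ?W"
    unfolding vectorspace.basis_def[OF vsW] by simp
  hence spanS: "span S = ?W" using span_li_not_depend(1)[OF SW submW] by simp
  obtain bs where bs: "set bs = S" "distinct bs" using finite_distinct_list[OF fS] by blast
  have "length bs = rank N" using bs cS rk distinct_card by metis
  moreover have "set (cols N) \<subseteq> span (set bs)" unfolding bs(1) spanS using in_own_span[OF cN] .
  ultimately show ?thesis using bs SM liS by blast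
qed

lemma factor_exists:
  fixes A :: "'a::field mat"
  assumes A: "A \<in> carrier_mat n n" and rk: "mrank (A ^\<^sub>m (k+1)) = mrank (A ^\<^sub>m k)"
  shows "\<exists>F W Z. F \<in> carrier_mat n (mrank (A ^\<^sub>m k)) \<and> W \<in> carrier_mat (mrank (A ^\<^sub>m k)) n
    \<and> Z \<in> carrier_mat n (mrank (A ^\<^sub>m k)) \<and> A ^\<^sub>m k = F * W \<and> F = A ^\<^sub>m (k+1) * Z
    \<and> (\<forall>v \<in> carrier_vec (mrank (A ^\<^sub>m k)). F *\<^sub>v v = 0\<^sub>v n \<longrightarrow> v = 0\<^sub>v (mrank (A ^\<^sub>m k)))"
proof -
  interpret vec_space "TYPE('a)" n .
  define M where "M = A ^\<^sub>m (k+1)"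
  define N where "N = A ^\<^sub>m k"
  define r where "r = mrank N"
  have M: "M \<in> carrier_mat n n" and N: "N \<in> carrier_mat n n" unfolding M_def N_def using A by auto
  have MN: "M = N * A" unfolding M_def N_def by simp
  have rM: "mrank M = rank M" "mrank N = rank N" unfolding mrank_def using M N by auto
  have sub: "set (cols M) \<subseteq> span (set (cols N))"
  proof
    fix c assume "c \<in> set (cols M)"
    then obtain j where j: "j < n" "c = col M j" using M by (auto simp: in_set_conv_nth)
    have "c = col (N * A) j" using j MN by simp
    also have "\<dots> = N *\<^sub>v col A j" by (rule col_mult2[OF N A j(1)])
    finally have "c = N *\<^sub>v col A j" .
    moreover have "col A j \<in> carrier_vec n" using A j by simp
    ultimately have "c \<in> col_space N" unfolding col_space_eq[OF N] using N A by auto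
    thus "c \<in> span (set (cols N))" unfolding col_space_def .
  qed
  obtain bs where bs: "distinct bs" "set bs \<subseteq> set (cols M)" "lin_indpt (set bs)" "length bs = rank N"
     "set (cols N) \<subseteq> span (set bs)"
    using basis_of_colspace[OF M N sub] rk rM unfolding M_def N_def by auto
  have bsc: "set bs \<subseteq> carrier_vec n" using bs(2) M cols_dim by blast
  define F where "F = mat_of_cols n bs"
  have F: "F \<in> carrier_mat n r" unfolding F_def r_def using mat_of_cols_carrier(1)[of n bs] bs(4) rM by simp
  have cF: "cols F = bs" unfolding F_def using bsc by simp
  have "\<forall>l<n. \<exists>x. x \<in> carrier_vec r \<and> F *\<^sub>v x = col N l"
  proof (intro allI impI)
    fix l assume l: "l < n"
    have "col N l \<in> set (cols N)" using N l by (simp add: cols_def)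
    hence "col N l \<in> col_space F" using bs(5) unfolding col_space_def cF by auto
    thus "\<exists>x. x \<in> carrier_vec r \<and> F *\<^sub>v x = col N l" unfolding col_space_eq[OF F] using F by auto
  qed
  then obtain xf where xf: "\<And>l. l < n \<Longrightarrow> xf l \<in> carrier_vec r \<and> F *\<^sub>v xf l = col N l" by metis
  define W where "W = mat r n (\<lambda>(a,l). xf l $ a)"
  have W: "W \<in> carrier_mat r n" unfolding W_def by simp
  have NFW: "N = F * W"
  proof (rule eq_matI)
    fix i l assume il: "i < dim_row (F * W)" "l < dim_col (F * W)"
    hence il': "i < n" "l < n" using F W by auto
    have cW: "col W l = xf l" using xf[OF il'(2)] il'(2) unfolding W_def by (intro eq_vecI) auto
    have "(F * W) $$ (i,l) = (F *\<^sub>v xf l) $ i" using il' F W cW by simp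
    also have "\<dots> = N $$ (i,l)" using xf[OF il'(2)] il' N by simp
    finally show "N $$ (i, l) = (F * W) $$ (i, l)" by simp
  qed (insert N F W, auto)
  have "\<forall>q<r. \<exists>j. j < n \<and> bs ! q = col M j"
  proof (intro allI impI)
    fix q assume q: "q < r"
    hence "bs ! q \<in> set (cols M)" using bs(2,4) rM unfolding r_def by auto
    thus "\<exists>j. j < n \<and> bs ! q = col M j" using M by (auto simp: in_set_conv_nth)
  qed
  then obtain jf where jf: "\<And>q. q < r \<Longrightarrow> jf q < n \<and> bs ! q = col M (jf q)" by metis
  define Z where "Z = (mat n r (\<lambda>(j,q). if j = jf q then 1 else 0) :: 'a mat)"
  have Z: "Z \<in> carrier_mat n r" unfolding Z_def by simp
  have FMZ: "F = M * Z"
  proof (rule eq_matI)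
    fix i q assume iq: "i < dim_row (M * Z)" "q < dim_col (M * Z)"
    hence iq': "i < n" "q < r" using M Z by auto
    have cZ: "col Z q = unit_vec n (jf q)" using jf[OF iq'(2)] iq'(2) unfolding Z_def
      by (intro eq_vecI) (auto simp: unit_vec_def)
    have "(M * Z) $$ (i,q) = (M *\<^sub>v unit_vec n (jf q)) $ i" using iq' M Z cZ by simp
    also have "\<dots> = M $$ (i, jf q)" using M jf[OF iq'(2)] iq'(1) by simp
    also have "\<dots> = bs ! q $ i" using jf[OF iq'(2)] M iq' by simp
    also have "\<dots> = F $$ (i,q)" unfolding F_def using iq' bs(4) rM r_def by (simp add: mat_of_cols_index)
    finally show "F $$ (i, q) = (M * Z) $$ (i, q)" by simp
  qed (insert F M Z, auto)
  have inj: "\<forall>v \<in> carrier_vec r. F *\<^sub>v v = 0\<^sub>v n \<longrightarrow> v = 0\<^sub>v r"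
  proof (intro ballI impI, rule ccontr)
    fix v assume v: "v \<in> carrier_vec r" "F *\<^sub>v v = 0\<^sub>v n" "v \<noteq> 0\<^sub>v r"
    have "lin_dep (set (cols F))" by (rule lin_depI[OF F v(1) v(3) v(2)], simp add: cF bs(1))
    thus False using bs(3) cF by simp
  qed
  show ?thesis using F W Z NFW FMZ inj unfolding r_def M_def N_def by blast
qed

lemma pow_mat_Suc_left:
  fixes A :: "'a::semiring_1 mat"
  assumes A: "A \<in> carrier_mat n n"
  shows "A ^\<^sub>m (Suc k) = A * A ^\<^sub>m k"
proof (induct k)
  case 0 thus ?case using A by simp
next
  case (Suc k)
  have "A ^\<^sub>m Suc (Suc k) = (A * A ^\<^sub>m k) * A" using Suc by simp
  also have "\<dots> = A * (A ^\<^sub>m k * A)" using A by (simp add: assoc_mult_mat[of _ n n _ n _ n])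
  finally show ?case by simp
qed

lemma pow_mat_commute:
  fixes A X :: "'a::semiring_1 mat"
  assumes A: "A \<in> carrier_mat n n" and X: "X \<in> carrier_mat n n" and c: "A * X = X * A"
  shows "A ^\<^sub>m k * X = X * A ^\<^sub>m k"
proof (induct k)
  case 0 thus ?case using A X by simp
next
  case (Suc k)
  have Ak: "A ^\<^sub>m k \<in> carrier_mat n n" using A by simp
  have "A ^\<^sub>m Suc k * X = A ^\<^sub>m k * (A * X)" using A X Ak by (simp add: assoc_mult_mat[of _ n n _ n _ n])
  also have "\<dots> = (A ^\<^sub>m k * X) * A" using A X Ak c by (simp add: assoc_mult_mat[of _ n n _ n _ n])
  also have "\<dots> = X * A ^\<^sub>m Suc k" using A X Ak Suc by (simp add: assoc_mult_mat[of _ n n _ n _ n])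
  finally show ?case .
qed

lemma drazin_pow1:
  fixes A X :: "'a::semiring_1 mat"
  assumes A: "A \<in> carrier_mat n n" and X: "X \<in> carrier_mat n n"
    and xax: "X * A * X = X" and c: "A * X = X * A"
  shows "X ^\<^sub>m (Suc j) * A ^\<^sub>m j = X" "A ^\<^sub>m j * X ^\<^sub>m (Suc j) = X"
proof -
  note as = assoc_mult_mat[of _ n n _ n _ n]
  have XXA: "X * X * A = X" using xax c A X by (metis as)
  have AXX: "A * X * X = X" using xax c A X by (metis as)
  show "X ^\<^sub>m (Suc j) * A ^\<^sub>m j = X"
  proof (induct j)
    case 0 thus ?case using X A by simp
  next
    case (Suc j)
    have Xj: "X ^\<^sub>m j \<in> carrier_mat n n" "A ^\<^sub>m j \<in> carrier_mat n n" using X A by auto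
    have "X ^\<^sub>m Suc (Suc j) * A ^\<^sub>m Suc j = X ^\<^sub>m j * (X * X * A) * A ^\<^sub>m j"
      using Xj A X pow_mat_Suc_left[OF A, of j] by (simp add: as)
    also have "\<dots> = X ^\<^sub>m (Suc j) * A ^\<^sub>m j" using XXA Xj X by simp
    finally show ?case using Suc by simp
  qed
  show "A ^\<^sub>m j * X ^\<^sub>m (Suc j) = X"
  proof (induct j)
    case 0 thus ?case using X A by simp
  next
    case (Suc j)
    have Xj: "X ^\<^sub>m j \<in> carrier_mat n n" "A ^\<^sub>m j \<in> carrier_mat n n" using X A by auto
    have "A ^\<^sub>m Suc j * X ^\<^sub>m Suc (Suc j) = A ^\<^sub>m j * (A * X * X) * X ^\<^sub>m j"
      using Xj A X pow_mat_Suc_left[OF X, of j] pow_mat_Suc_left[OF X, of "Suc j"] by (simp add: as)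
    also have "\<dots> = A ^\<^sub>m j * X ^\<^sub>m (Suc j)" using AXX Xj X pow_mat_Suc_left[OF X, of j] by (simp add: as)
    finally show ?case using Suc by simp
  qed
qed

lemma drazin_unique:
  fixes A X Y :: "'a::semiring_1 mat"
  assumes A: "A \<in> carrier_mat n n" and X: "X \<in> carrier_mat n n" and Y: "Y \<in> carrier_mat n n"
    and X1: "A ^\<^sub>m (k+1) * X = A ^\<^sub>m k" and X2: "X * A * X = X" and X3: "A * X = X * A"
    and Y1: "A ^\<^sub>m (k+1) * Y = A ^\<^sub>m k" and Y2: "Y * A * Y = Y" and Y3: "A * Y = Y * A"
  shows "X = Y"
proof -
  note as = assoc_mult_mat[of _ n n _ n _ n]
  have P: "X ^\<^sub>m (Suc k) \<in> carrier_mat n n" "Y ^\<^sub>m (Suc k) \<in> carrier_mat n n"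
    "A ^\<^sub>m k \<in> carrier_mat n n" "A ^\<^sub>m (Suc k) \<in> carrier_mat n n" using A X Y by auto
  have "X = X ^\<^sub>m (Suc k) * A ^\<^sub>m k" using drazin_pow1(1)[OF A X X2 X3] by simp
  also have "\<dots> = X ^\<^sub>m (Suc k) * (A ^\<^sub>m (Suc k) * Y)" using Y1 by simp
  also have "\<dots> = (X ^\<^sub>m (Suc k) * A ^\<^sub>m k) * A * Y" using P A Y by (simp add: as)
  also have "\<dots> = X * A * Y" using drazin_pow1(1)[OF A X X2 X3] by simp
  finally have e1: "X = X * A * Y" .
  have "Y = A ^\<^sub>m k * Y ^\<^sub>m (Suc k)" using drazin_pow1(2)[OF A Y Y2 Y3] by simp
  also have "\<dots> = (A ^\<^sub>m (Suc k) * X) * Y ^\<^sub>m (Suc k)" using X1 by simp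
  also have "\<dots> = (X * A ^\<^sub>m (Suc k)) * Y ^\<^sub>m (Suc k)" using pow_mat_commute[OF A X X3, of "Suc k"] by simp
  also have "\<dots> = X * A * (A ^\<^sub>m k * Y ^\<^sub>m (Suc k))"
  proof -
    have "X * A ^\<^sub>m (Suc k) = (X * A) * A ^\<^sub>m k" using pow_mat_Suc_left[OF A, of k] P A X by (simp add: as)
    moreover have "X * A \<in> carrier_mat n n" using X A by simp
    ultimately show ?thesis using P by (simp add: as)
  qed
  also have "\<dots> = X * A * Y" using drazin_pow1(2)[OF A Y Y2 Y3] by simp
  finally have e2: "Y = X * A * Y" .
  show ?thesis using e1 e2 by simp
qed

lemma drazin_inv_eq:
  fixes A Y :: "'a::field mat"
  assumes A: "A \<in> carrier_mat n n" and Y: "Y \<in> carrier_mat n n"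
    and Y1: "A ^\<^sub>m (mat_index A + 1) * Y = A ^\<^sub>m (mat_index A)" and Y2: "Y * A * Y = Y" and Y3: "A * Y = Y * A"
  shows "drazin_inv A = Y"
  unfolding drazin_inv_def
proof (rule the_equality)
  show "Y \<in> carrier_mat (dim_row A) (dim_row A) \<and> A ^\<^sub>m (mat_index A + 1) * Y = A ^\<^sub>m mat_index A \<and> Y * A * Y = Y \<and> A * Y = Y * A"
    using A Y Y1 Y2 Y3 by simp
  fix X assume "X \<in> carrier_mat (dim_row A) (dim_row A) \<and> A ^\<^sub>m (mat_index A + 1) * X = A ^\<^sub>m mat_index A \<and> X * A * X = X \<and> A * X = X * A"
  thus "X = Y" using drazin_unique[OF A _ Y _ _ _ Y1 Y2 Y3] A by auto
qed

lemma massoc: "dim_col A = dim_row B \<Longrightarrow> dim_col B = dim_row C \<Longrightarrow> A * B * (C :: 'a :: semiring_0 mat) = A * (B * C)"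
  by (rule assoc_mult_mat[of A "dim_row A" "dim_col A" B "dim_col B" C "dim_col C"]) auto

lemma inj_mat_cancel:
  fixes F :: "'a::field mat"
  assumes F: "F \<in> carrier_mat n r" and inj: "\<forall>v \<in> carrier_vec r. F *\<^sub>v v = 0\<^sub>v n \<longrightarrow> v = 0\<^sub>v r"
    and X: "X \<in> carrier_mat r c" and Y: "Y \<in> carrier_mat r c" and e: "F * X = F * Y"
  shows "X = Y"
proof (rule eq_matI)
  fix i j assume ij: "i < dim_row Y" "j < dim_col Y"
  hence ij': "i < r" "j < c" using Y by auto
  have cx: "col X j \<in> carrier_vec r" "col Y j \<in> carrier_vec r" using X Y ij' by auto
  have "F *\<^sub>v (col X j - col Y j) = F *\<^sub>v col X j - F *\<^sub>v col Y j"
    using mult_minus_distrib_mat_vec[OF F cx] .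
  also have "F *\<^sub>v col X j = col (F * X) j" by (rule col_mult2[OF F X ij'(2), symmetric])
  also have "F *\<^sub>v col Y j = col (F * Y) j" by (rule col_mult2[OF F Y ij'(2), symmetric])
  also have "col (F * X) j - col (F * Y) j = 0\<^sub>v n" using e F Y ij' by (intro eq_vecI) auto
  finally have "col X j - col Y j = 0\<^sub>v r" using inj cx by auto
  hence "(col X j - col Y j) $ i = 0" using ij'(1) by simp
  thus "X $$ (i, j) = Y $$ (i, j)" using cx ij' X Y by simp
qed (insert X Y, auto)

lemma drazin_structure:
  fixes A :: "'a::field mat"
  assumes A: "A \<in> carrier_mat n n" and ind: "mat_index A = k"
    and rk: "mrank (A ^\<^sub>m (k+1)) = mrank (A ^\<^sub>m k)"
  defines "r \<equiv> mrank (A ^\<^sub>m k)"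
  shows "\<exists>F W L Li. F \<in> carrier_mat n r \<and> W \<in> carrier_mat r n \<and> L \<in> carrier_mat r r \<and> Li \<in> carrier_mat r r
     \<and> L * Li = 1\<^sub>m r \<and> Li * L = 1\<^sub>m r \<and> A ^\<^sub>m k = F * W \<and> A ^\<^sub>m (k+1) = F * (L * W)
     \<and> (L * W) * F = L ^\<^sub>m (k+1) \<and> L ^\<^sub>m (k+1) * Li ^\<^sub>m (k+1) = 1\<^sub>m r
     \<and> Li ^\<^sub>m (k+1) * L = L * Li ^\<^sub>m (k+1)
     \<and> drazin_inv A = F * Li ^\<^sub>m (k+1) * W"
proof -
  obtain F W Z where F: "F \<in> carrier_mat n r" and W: "W \<in> carrier_mat r n" and Z: "Z \<in> carrier_mat n r"
    and NFW: "A ^\<^sub>m k = F * W" and FMZ: "F = A ^\<^sub>m (k+1) * Z"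
    and inj: "\<forall>v \<in> carrier_vec r. F *\<^sub>v v = 0\<^sub>v n \<longrightarrow> v = 0\<^sub>v r"
    using factor_exists[OF A rk] unfolding r_def by blast
  have dims: "dim_row A = n" "dim_col A = n" "dim_row F = n" "dim_col F = r" "dim_row W = r" "dim_col W = n"
    "dim_row Z = n" "dim_col Z = r" using A F W Z by auto
  note sa = dims massoc
  have cancel: "\<And>X Y c. X \<in> carrier_mat r c \<Longrightarrow> Y \<in> carrier_mat r c \<Longrightarrow> F * X = F * Y \<Longrightarrow> X = Y"
    using inj_mat_cancel[OF F inj] by blast
  define L where "L = W * A * A * Z"
  have L: "L \<in> carrier_mat r r" unfolding L_def using W A Z by (meson mult_carrier_mat)
  have dL: "dim_row L = r" "dim_col L = r" using L by auto
  have Asuc: "A ^\<^sub>m (Suc j) = A * A ^\<^sub>m j" for j by (rule pow_mat_Suc_left[OF A])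
  have AF: "A * F = F * L"
  proof -
    have "A * F = A * A ^\<^sub>m (k+1) * Z" unfolding FMZ using A Z by (simp add: sa)
    also have "A * A ^\<^sub>m (k+1) = A ^\<^sub>m k * A * A" using Asuc[of "k+1"] by simp
    also have "\<dots> * Z = F * L" unfolding NFW L_def by (simp add: sa)
    finally show ?thesis .
  qed
  define Li where "Li = W * Z"
  have Li: "Li \<in> carrier_mat r r" unfolding Li_def using W Z by simp
  have dLi: "dim_row Li = r" "dim_col Li = r" using Li by auto
  have LLi: "L * Li = 1\<^sub>m r"
  proof (rule cancel[of _ r])
    have "F * (L * Li) = (F * L) * Li" by (simp add: sa dL dLi)
    also have "\<dots> = (A * F) * (W * Z)" unfolding AF Li_def ..
    also have "\<dots> = A * (A ^\<^sub>m k * Z)" unfolding NFW by (simp add: sa)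
    also have "\<dots> = F" unfolding FMZ using Asuc[of k] A Z by (simp add: sa)
    finally show "F * (L * Li) = F * 1\<^sub>m r" by (simp add: sa)
  qed (insert L Li, auto)
  have LiL: "Li * L = 1\<^sub>m r" by (rule mat_mult_left_right_inverse[OF L Li LLi])
  have AjF: "A ^\<^sub>m j * F = F * L ^\<^sub>m j" for j
  proof (induct j)
    case 0 thus ?case using F by (simp add: dims dL)
  next
    case (Suc j)
    have "A ^\<^sub>m Suc j * F = A ^\<^sub>m j * (A * F)" using A by (simp add: sa)
    also have "\<dots> = (A ^\<^sub>m j * F) * L" unfolding AF using A by (simp add: sa dL)
    also have "\<dots> = F * L ^\<^sub>m Suc j" unfolding Suc using L by (simp add: sa dL)
    finally show ?case .
  qed
  have WF: "W * F = L ^\<^sub>m k"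
  proof (rule cancel[of _ r])
    show "F * (W * F) = F * L ^\<^sub>m k" using AjF[of k] unfolding NFW by (simp add: sa)
  qed (insert W F L, auto)
  have M: "A ^\<^sub>m (k+1) = F * (L * W)"
  proof -
    have "A ^\<^sub>m (k+1) = A * (F * W)" using Asuc[of k] NFW by simp
    also have "\<dots> = F * (L * W)" using AF by (simp add: sa dL flip: massoc)
    finally show ?thesis .
  qed
  have K: "(L * W) * F = L ^\<^sub>m (k+1)"
    using WF pow_mat_Suc_left[OF L, of k] by (simp add: sa dL)
  have WA: "W * A = L * W"
  proof (rule cancel[of _ n])
    have "F * (W * A) = A ^\<^sub>m (k+1)" unfolding M[symmetric] using NFW by (simp add: sa flip: massoc)
    thus "F * (W * A) = F * (L * W)" using M by simp
  qed (insert W A L, auto)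
  have pinv: "L ^\<^sub>m j * Li ^\<^sub>m j = 1\<^sub>m r" for j
  proof (induct j)
    case 0 thus ?case using L Li by simp
  next
    case (Suc j)
    have "L ^\<^sub>m Suc j * Li ^\<^sub>m Suc j = L * (L ^\<^sub>m j * Li ^\<^sub>m j) * Li"
      using pow_mat_Suc_left[OF L, of j] L Li by (simp add: sa dL dLi)
    thus ?case using Suc LLi L by (simp add: dL)
  qed
  have comm: "Li ^\<^sub>m (k+1) * L = L * Li ^\<^sub>m (k+1)"
  proof -
    have "Li ^\<^sub>m (k+1) * L = Li ^\<^sub>m k" using LiL Li L by (simp add: sa dL dLi)
    moreover have "L * Li ^\<^sub>m (k+1) = Li ^\<^sub>m k" using pow_mat_Suc_left[OF Li, of k] LLi L Li
      by (simp add: sa dL dLi flip: massoc)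
    ultimately show ?thesis by simp
  qed
  define Ki where "Ki = Li ^\<^sub>m (k+1)"
  have Ki: "Ki \<in> carrier_mat r r" unfolding Ki_def by (rule pow_carrier_mat[OF Li])
  have dKi: "dim_row Ki = r" "dim_col Ki = r" using Ki by auto
  have KKi: "L ^\<^sub>m (k+1) * Ki = 1\<^sub>m r" unfolding Ki_def by (rule pinv)
  have KiK: "Ki * L ^\<^sub>m (k+1) = 1\<^sub>m r" by (rule mat_mult_left_right_inverse[OF _ Ki KKi], rule pow_carrier_mat[OF L])
  define Y where "Y = F * Ki * W"
  have Y: "Y \<in> carrier_mat n n" unfolding Y_def using F Ki W by simp
  have Y1: "A ^\<^sub>m (k+1) * Y = A ^\<^sub>m k"
  proof -
    have "A ^\<^sub>m (k+1) * Y = F * ((L * W) * F * Ki) * W" unfolding M Y_def by (simp add: sa dL dKi)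
    also have "\<dots> = F * W" unfolding K KKi by (simp add: sa)
    finally show ?thesis using NFW by simp
  qed
  have Y2: "Y * A * Y = Y"
  proof -
    have "Y * A * Y = F * (Ki * ((W * A) * F) * Ki) * W" unfolding Y_def by (simp add: sa dL dKi)
    also have "(W * A) * F = L ^\<^sub>m (k+1)" unfolding WA using K by simp
    also have "Ki * L ^\<^sub>m (k+1) * Ki = Ki" unfolding KiK using Ki by simp
    finally show ?thesis unfolding Y_def by (simp add: sa dKi)
  qed
  have Y3: "A * Y = Y * A"
  proof -
    have "A * Y = F * (L * Ki) * W" unfolding Y_def using AF by (simp add: sa dL dKi flip: massoc)
    also have "L * Ki = Ki * L" unfolding Ki_def using comm by simp
    also have "F * (Ki * L) * W = Y * A" unfolding Y_def using WA by (simp add: sa dL dKi)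
    finally show ?thesis .
  qed
  have "drazin_inv A = Y" by (rule drazin_inv_eq[OF A Y], insert Y1 Y2 Y3 ind, auto)
  thus ?thesis using F W L Li LLi LiL NFW M K KKi comm unfolding Y_def Ki_def by blast
qed

lemma row_prod_transpose:
  fixes P G :: "'a::comm_semiring_0 mat"
  assumes P: "P \<in> carrier_mat a b" and G: "G \<in> carrier_mat b c" and l: "l < a"
  shows "row (P * G) l = transpose_mat G *\<^sub>v row P l"
proof (rule eq_vecI)
  fix t assume "t < dim_vec (transpose_mat G *\<^sub>v row P l)"
  hence t: "t < c" using G by simp
  have "(transpose_mat G *\<^sub>v row P l) $ t = col G t \<bullet> row P l" using G t by simp
  also have "\<dots> = row P l \<bullet> col G t" using P G t l by (intro comm_scalar_prod[of _ b]) auto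
  finally show "row (P * G) l $ t = (transpose_mat G *\<^sub>v row P l) $ t" using P G t l by simp
qed (insert P G, auto)

lemma entry_via_row:
  fixes P Ki G :: "'a::comm_semiring_0 mat"
  assumes P: "P \<in> carrier_mat a r" and Ki: "Ki \<in> carrier_mat r r" and G: "G \<in> carrier_mat r c"
    and l: "l < a" and j: "j < c"
  shows "col G j \<bullet> (transpose_mat Ki *\<^sub>v row P l) = (P * Ki * G) $$ (l,j)"
proof -
  have "transpose_mat Ki *\<^sub>v row P l = row (P * Ki) l" using row_prod_transpose[OF P Ki l] by simp
  hence "col G j \<bullet> (transpose_mat Ki *\<^sub>v row P l) = row (P * Ki) l \<bullet> col G j"
    using P Ki G l j by (simp add: comm_scalar_prod[of _ r])
  also have "\<dots> = (P * Ki * G) $$ (l,j)" by (rule sym, rule index_mult_mat(1)) (use P Ki G l j in auto)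
  finally show ?thesis .
qed

lemma entry_via_col:
  fixes F Ki Q :: "'a::comm_semiring_0 mat"
  assumes F: "F \<in> carrier_mat a r" and Ki: "Ki \<in> carrier_mat r r" and Q: "Q \<in> carrier_mat r c"
    and i: "i < a" and j: "j < c"
  shows "row F i \<bullet> (Ki *\<^sub>v col Q j) = (F * Ki * Q) $$ (i,j)"
proof -
  have "Ki *\<^sub>v col Q j = col (Ki * Q) j" by (rule col_mult2[OF Ki Q j, symmetric])
  hence "row F i \<bullet> (Ki *\<^sub>v col Q j) = (F * (Ki * Q)) $$ (i,j)" using F Ki Q i j by simp
  thus ?thesis using F Ki Q by (simp add: assoc_mult_mat[OF F Ki Q])
qed

lemma det_ne0_of_inv:
  fixes K Ki :: "'a::field mat"
  assumes K: "K \<in> carrier_mat r r" and Ki: "Ki \<in> carrier_mat r r" and e: "K * Ki = 1\<^sub>m r"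
  shows "det K \<noteq> 0"
proof
  assume "det K = 0"
  hence "det (K * Ki) = 0" using det_mult[OF K Ki] by simp
  thus False using e by simp
qed

theorem theorem4p9:
  fixes A :: "complex mat" and B :: "complex mat" and D :: "complex mat"
    and n m k1 k2 r1 r2 :: nat
  assumes A: "A \<in> carrier_mat n n"
    and B: "B \<in> carrier_mat m m"
    and Dc: "D \<in> carrier_mat n m"
    and indA: "mat_index A = k1"
    and rA: "mrank (A ^\<^sub>m (k1+1)) = mrank (A ^\<^sub>m k1)" "mrank (A ^\<^sub>m k1) = r1" "r1 \<le> n"
    and indB: "mat_index B = k2"
    and rB: "mrank (B ^\<^sub>m (k2+1)) = mrank (B ^\<^sub>m k2)" "mrank (B ^\<^sub>m k2) = r2" "r2 \<le> m"
  defines "dB \<equiv> (\<lambda>j. vec n (\<lambda>l. \<Sum>\<alpha>\<in>idx_sets_with r2 m j.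
                det (principal_sub (replace_row (B ^\<^sub>m (k2+1)) (row (A ^\<^sub>m k1 * D * B ^\<^sub>m k2) l) j) \<alpha>)))"
    and "dA \<equiv> (\<lambda>i. vec m (\<lambda>t. \<Sum>\<beta>\<in>idx_sets_with r1 n i.
                det (principal_sub (replace_col (A ^\<^sub>m (k1+1)) (col (A ^\<^sub>m k1 * D * B ^\<^sub>m k2) t) i) \<beta>)))"
    and "den \<equiv> (\<Sum>\<beta>\<in>idx_sets r1 n. det (principal_sub (A ^\<^sub>m (k1+1)) \<beta>)) *
               (\<Sum>\<alpha>\<in>idx_sets r2 m. det (principal_sub (B ^\<^sub>m (k2+1)) \<alpha>))"
    and "X \<equiv> drazin_inv A * D * drazin_inv B"
  shows "\<forall>i<n. \<forall>j<m.
     X $$ (i,j) = (\<Sum>\<beta>\<in>idx_sets_with r1 n i.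
                     det (principal_sub (replace_col (A ^\<^sub>m (k1+1)) (dB j) i) \<beta>)) / den
   \<and> X $$ (i,j) = (\<Sum>\<alpha>\<in>idx_sets_with r2 m j.
                     det (principal_sub (replace_row (B ^\<^sub>m (k2+1)) (dA i) j) \<alpha>)) / den"
proof -
  obtain F1 W1 L1 Li1 where F1: "F1 \<in> carrier_mat n r1" and W1: "W1 \<in> carrier_mat r1 n"
    and L1: "L1 \<in> carrier_mat r1 r1" and Li1: "Li1 \<in> carrier_mat r1 r1"
    and LLi1: "L1 * Li1 = 1\<^sub>m r1" and LiL1: "Li1 * L1 = 1\<^sub>m r1"
    and N1: "A ^\<^sub>m k1 = F1 * W1" and M1: "A ^\<^sub>m (k1+1) = F1 * (L1 * W1)"
    and K1: "(L1 * W1) * F1 = L1 ^\<^sub>m (k1+1)" and KK1: "L1 ^\<^sub>m (k1+1) * Li1 ^\<^sub>m (k1+1) = 1\<^sub>m r1"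
    and C1: "Li1 ^\<^sub>m (k1+1) * L1 = L1 * Li1 ^\<^sub>m (k1+1)"
    and D1: "drazin_inv A = F1 * Li1 ^\<^sub>m (k1+1) * W1"
    using drazin_structure[OF A indA rA(1)] unfolding rA(2) by blast
  obtain F2 W2 L2 Li2 where F2: "F2 \<in> carrier_mat m r2" and W2: "W2 \<in> carrier_mat r2 m"
    and L2: "L2 \<in> carrier_mat r2 r2" and Li2: "Li2 \<in> carrier_mat r2 r2"
    and LLi2: "L2 * Li2 = 1\<^sub>m r2" and LiL2: "Li2 * L2 = 1\<^sub>m r2"
    and N2: "B ^\<^sub>m k2 = F2 * W2" and M2: "B ^\<^sub>m (k2+1) = F2 * (L2 * W2)"
    and K2: "(L2 * W2) * F2 = L2 ^\<^sub>m (k2+1)" and KK2: "L2 ^\<^sub>m (k2+1) * Li2 ^\<^sub>m (k2+1) = 1\<^sub>m r2"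
    and C2: "Li2 ^\<^sub>m (k2+1) * L2 = L2 * Li2 ^\<^sub>m (k2+1)"
    and D2: "drazin_inv B = F2 * Li2 ^\<^sub>m (k2+1) * W2"
    using drazin_structure[OF B indB rB(1)] unfolding rB(2) by blast
  define G1 where "G1 = L1 * W1"
  define G2 where "G2 = L2 * W2"
  define Ki1 where "Ki1 = Li1 ^\<^sub>m (k1+1)"
  define Ki2 where "Ki2 = Li2 ^\<^sub>m (k2+1)"
  define c1 where "c1 = det (G1 * F1)"
  define c2 where "c2 = det (G2 * F2)"
  have G1: "G1 \<in> carrier_mat r1 n" unfolding G1_def using L1 W1 by (meson mult_carrier_mat)
  have G2: "G2 \<in> carrier_mat r2 m" unfolding G2_def using L2 W2 by (meson mult_carrier_mat)
  have Ki1: "Ki1 \<in> carrier_mat r1 r1" unfolding Ki1_def by (rule pow_carrier_mat[OF Li1])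
  have Ki2: "Ki2 \<in> carrier_mat r2 r2" unfolding Ki2_def by (rule pow_carrier_mat[OF Li2])
  have GFK1: "(G1 * F1) * Ki1 = 1\<^sub>m r1" unfolding G1_def Ki1_def K1 by (rule KK1)
  have GFK2: "(G2 * F2) * Ki2 = 1\<^sub>m r2" unfolding G2_def Ki2_def K2 by (rule KK2)
  have dims: "dim_row A = n" "dim_col A = n" "dim_row B = m" "dim_col B = m" "dim_row D = n" "dim_col D = m"
    "dim_row F1 = n" "dim_col F1 = r1" "dim_row W1 = r1" "dim_col W1 = n"
    "dim_row F2 = m" "dim_col F2 = r2" "dim_row W2 = r2" "dim_col W2 = m"
    "dim_row L1 = r1" "dim_col L1 = r1" "dim_row Li1 = r1" "dim_col Li1 = r1"
    "dim_row L2 = r2" "dim_col L2 = r2" "dim_row Li2 = r2" "dim_col Li2 = r2"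
    "dim_row Ki1 = r1" "dim_col Ki1 = r1" "dim_row Ki2 = r2" "dim_col Ki2 = r2"
    "dim_row G1 = r1" "dim_col G1 = n" "dim_row G2 = r2" "dim_col G2 = m"
    using A B Dc F1 W1 F2 W2 L1 Li1 L2 Li2 Ki1 Ki2 G1 G2 by auto
  note sa = dims massoc
  have c1ne: "c1 \<noteq> 0" unfolding c1_def using det_ne0_of_inv[OF _ Ki1 GFK1] G1 F1 by simp
  have c2ne: "c2 \<noteq> 0" unfolding c2_def using det_ne0_of_inv[OF _ Ki2 GFK2] G2 F2 by simp
  have M1': "A ^\<^sub>m (k1+1) = F1 * G1" using M1 unfolding G1_def .
  have M2': "B ^\<^sub>m (k2+1) = F2 * G2" using M2 unfolding G2_def .
  have den: "den = c1 * c2" unfolding den_def M1' M2' c1_def c2_def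
    using cb_principal[OF F1 G1] cb_principal[OF F2 G2] by simp
  define YA where "YA = F1 * Ki1 * W1"
  define YB where "YB = F2 * Ki2 * W2"
  have YA: "YA \<in> carrier_mat n n" unfolding YA_def using F1 Ki1 W1 by (meson mult_carrier_mat)
  have YB: "YB \<in> carrier_mat m m" unfolding YB_def using F2 Ki2 W2 by (meson mult_carrier_mat)
  have dY: "dim_row YA = n" "dim_col YA = n" "dim_row YB = m" "dim_col YB = m" using YA YB by auto
  have Xe: "X = YA * D * YB" unfolding X_def D1 D2 YA_def YB_def Ki1_def Ki2_def ..
  have Xc: "X \<in> carrier_mat n m" using Xe YA YB Dc by (meson mult_carrier_mat)
  have LKL2: "Li2 * Ki2 * L2 = Ki2"
  proof -
    have "Li2 * Ki2 * L2 = Li2 * (Ki2 * L2)" using Li2 Ki2 L2 by (simp add: sa dY)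
    also have "Ki2 * L2 = L2 * Ki2" using C2 unfolding Ki2_def .
    also have "Li2 * (L2 * Ki2) = (Li2 * L2) * Ki2" using Li2 Ki2 L2 by (simp add: sa dY)
    finally show ?thesis using LiL2 Ki2 by simp
  qed
  define Dt where "Dt = A ^\<^sub>m k1 * D * B ^\<^sub>m k2"
  define P where "P = F1 * W1 * D * F2 * Li2"
  have P: "P \<in> carrier_mat n r2" unfolding P_def using F1 W1 Dc F2 Li2 by (meson mult_carrier_mat)
  have DtP: "Dt = P * G2"
  proof -
    have "P * G2 = F1 * W1 * D * F2 * ((Li2 * L2) * W2)" unfolding P_def G2_def by (simp add: sa dY)
    also have "\<dots> = Dt" unfolding LiL2 Dt_def N1 N2 using W2 by (simp add: sa dY)
    finally show ?thesis by simp
  qed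
  define V where "V = W1 * D * B ^\<^sub>m k2"
  have V: "V \<in> carrier_mat r1 m" unfolding V_def using W1 Dc pow_carrier_mat[OF B] by (meson mult_carrier_mat)
  have DtV: "Dt = F1 * V" unfolding Dt_def V_def N1 using F1 W1 Dc B by (simp add: sa dY)
  show ?thesis
  proof (intro allI impI)
    fix i j assume i: "i < n" and j: "j < m"
    define Q where "Q = W1 * D * YB"
    have Q: "Q \<in> carrier_mat r1 m" unfolding Q_def using W1 Dc YB by (meson mult_carrier_mat)
    have dBj: "dB j = F1 *\<^sub>v (c2 \<cdot>\<^sub>v col Q j)"
    proof (rule eq_vecI)
      fix l assume "l < dim_vec (F1 *\<^sub>v (c2 \<cdot>\<^sub>v col Q j))"
      hence l: "l < n" using F1 by simp
      have rp: "row P l \<in> carrier_vec r2" using P l by simp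
      have "dB j $ l = (\<Sum>\<alpha>\<in>idx_sets_with r2 m j.
          det (principal_sub (replace_row (F2 * G2) (transpose_mat G2 *\<^sub>v row P l) j) \<alpha>))"
        unfolding dB_def using l M2' row_prod_transpose[OF P G2 l] DtP unfolding Dt_def by simp
      also have "\<dots> = c2 * (col G2 j \<bullet> (transpose_mat Ki2 *\<^sub>v row P l))"
        unfolding c2_def by (rule main_row[OF F2 G2 Ki2 GFK2 rp j])
      also have "col G2 j \<bullet> (transpose_mat Ki2 *\<^sub>v row P l) = (P * Ki2 * G2) $$ (l,j)"
        by (rule entry_via_row[OF P Ki2 G2 l j])
      also have "P * Ki2 * G2 = F1 * Q"
      proof -
        have "P * Ki2 * G2 = F1 * W1 * D * F2 * (Li2 * Ki2 * L2) * W2"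
          unfolding P_def G2_def by (simp add: sa dY)
        also have "\<dots> = F1 * Q" unfolding LKL2 Q_def YB_def by (simp add: sa dY)
        finally show ?thesis .
      qed
      also have "(F1 * Q) $$ (l,j) = row F1 l \<bullet> col Q j" using F1 Q l j by simp
      finally show "dB j $ l = (F1 *\<^sub>v (c2 \<cdot>\<^sub>v col Q j)) $ l" using F1 Q l j by simp
    qed (insert F1, simp add: dB_def)
    have w: "c2 \<cdot>\<^sub>v col Q j \<in> carrier_vec r1" using Q j by simp
    have part1: "(\<Sum>\<beta>\<in>idx_sets_with r1 n i. det (principal_sub (replace_col (A ^\<^sub>m (k1+1)) (dB j) i) \<beta>))
        = c1 * c2 * X $$ (i,j)"
    proof -
      have "(\<Sum>\<beta>\<in>idx_sets_with r1 n i. det (principal_sub (replace_col (A ^\<^sub>m (k1+1)) (dB j) i) \<beta>))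
         = c1 * (row F1 i \<bullet> (Ki1 *\<^sub>v (c2 \<cdot>\<^sub>v col Q j)))"
        unfolding M1' dBj c1_def by (rule main_col[OF F1 G1 Ki1 GFK1 w i])
      also have "Ki1 *\<^sub>v (c2 \<cdot>\<^sub>v col Q j) = c2 \<cdot>\<^sub>v (Ki1 *\<^sub>v col Q j)"
        using Ki1 Q j by (intro mult_mat_vec) auto
      also have "row F1 i \<bullet> (c2 \<cdot>\<^sub>v (Ki1 *\<^sub>v col Q j)) = c2 * (row F1 i \<bullet> (Ki1 *\<^sub>v col Q j))"
        using F1 Ki1 Q i j by simp
      also have "row F1 i \<bullet> (Ki1 *\<^sub>v col Q j) = (F1 * Ki1 * Q) $$ (i,j)"
        by (rule entry_via_col[OF F1 Ki1 Q i j])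
      also have "F1 * Ki1 * Q = X" unfolding Xe Q_def YA_def by (simp add: sa dY)
      finally show ?thesis by (simp add: algebra_simps)
    qed
    define R where "R = YA * D * F2 * Li2"
    have R: "R \<in> carrier_mat n r2" unfolding R_def using YA Dc F2 Li2 by (meson mult_carrier_mat)
    have dAi: "dA i = transpose_mat G2 *\<^sub>v (c1 \<cdot>\<^sub>v row R i)"
    proof (rule eq_vecI)
      fix t assume "t < dim_vec (transpose_mat G2 *\<^sub>v (c1 \<cdot>\<^sub>v row R i))"
      hence t: "t < m" using G2 by simp
      have cv: "col V t \<in> carrier_vec r1" using V t by simp
      have cDt: "col (A ^\<^sub>m k1 * D * B ^\<^sub>m k2) t = F1 *\<^sub>v col V t"
      proof -
        have "col (A ^\<^sub>m k1 * D * B ^\<^sub>m k2) t = col (F1 * V) t" using DtV unfolding Dt_def by simp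
        also have "\<dots> = F1 *\<^sub>v col V t" by (rule col_mult2[OF F1 V t])
        finally show ?thesis .
      qed
      have "dA i $ t = (\<Sum>\<beta>\<in>idx_sets_with r1 n i.
          det (principal_sub (replace_col (F1 * G1) (F1 *\<^sub>v col V t) i) \<beta>))"
        unfolding dA_def by (simp only: index_vec[OF t] cDt M1')
      also have "\<dots> = c1 * (row F1 i \<bullet> (Ki1 *\<^sub>v col V t))"
        unfolding c1_def by (rule main_col[OF F1 G1 Ki1 GFK1 cv i])
      also have "row F1 i \<bullet> (Ki1 *\<^sub>v col V t) = (F1 * Ki1 * V) $$ (i,t)"
        by (rule entry_via_col[OF F1 Ki1 V i t])
      also have "F1 * Ki1 * V = R * G2"
      proof -
        have "R * G2 = YA * D * F2 * ((Li2 * L2) * W2)" unfolding R_def G2_def using YA by (simp add: sa dY)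
        also have "\<dots> = F1 * Ki1 * V" unfolding LiL2 V_def N2 YA_def using W2 by (simp add: sa dY)
        finally show ?thesis by simp
      qed
      also have "(R * G2) $$ (i,t) = row R i \<bullet> col G2 t" using R G2 i t by simp
      also have "row R i \<bullet> col G2 t = col G2 t \<bullet> row R i" using R G2 i t by (intro comm_scalar_prod[of _ r2]) auto
      finally show "dA i $ t = (transpose_mat G2 *\<^sub>v (c1 \<cdot>\<^sub>v row R i)) $ t" using G2 R i t by simp
    qed (insert G2, simp add: dA_def)
    have p: "c1 \<cdot>\<^sub>v row R i \<in> carrier_vec r2" using R i by simp
    have part2: "(\<Sum>\<alpha>\<in>idx_sets_with r2 m j. det (principal_sub (replace_row (B ^\<^sub>m (k2+1)) (dA i) j) \<alpha>))
        = c1 * c2 * X $$ (i,j)"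
    proof -
      have "(\<Sum>\<alpha>\<in>idx_sets_with r2 m j. det (principal_sub (replace_row (B ^\<^sub>m (k2+1)) (dA i) j) \<alpha>))
         = c2 * (col G2 j \<bullet> (transpose_mat Ki2 *\<^sub>v (c1 \<cdot>\<^sub>v row R i)))"
        unfolding M2' dAi c2_def by (rule main_row[OF F2 G2 Ki2 GFK2 p j])
      also have "transpose_mat Ki2 *\<^sub>v (c1 \<cdot>\<^sub>v row R i) = c1 \<cdot>\<^sub>v (transpose_mat Ki2 *\<^sub>v row R i)"
        using Ki2 R i by (intro mult_mat_vec) auto
      also have "col G2 j \<bullet> (c1 \<cdot>\<^sub>v (transpose_mat Ki2 *\<^sub>v row R i)) = c1 * (col G2 j \<bullet> (transpose_mat Ki2 *\<^sub>v row R i))"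
        using G2 Ki2 R i j by simp
      also have "col G2 j \<bullet> (transpose_mat Ki2 *\<^sub>v row R i) = (R * Ki2 * G2) $$ (i,j)"
        by (rule entry_via_row[OF R Ki2 G2 i j])
      also have "R * Ki2 * G2 = X"
      proof -
        have "R * Ki2 * G2 = YA * D * F2 * (Li2 * Ki2 * L2) * W2" unfolding R_def G2_def using YA by (simp add: sa dY)
        also have "\<dots> = X" unfolding LKL2 Xe YB_def using YA by (simp add: sa dY)
        finally show ?thesis .
      qed
      finally show ?thesis by (simp add: algebra_simps)
    qed
    have "X $$ (i,j) = (c1 * c2 * X $$ (i,j)) / den" unfolding den using c1ne c2ne by simp
    thus "X $$ (i,j) = (\<Sum>\<beta>\<in>idx_sets_with r1 n i.
                     det (principal_sub (replace_col (A ^\<^sub>m (k1+1)) (dB j) i) \<beta>)) / den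
   \<and> X $$ (i,j) = (\<Sum>\<alpha>\<in>idx_sets_with r2 m j.
                     det (principal_sub (replace_row (B ^\<^sub>m (k2+1)) (dA i) j) \<alpha>)) / den"
      unfolding part1 part2 by simp
  qed
qed

end
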